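(* Let $f: \mathbb{R}^{R \times C} \to \mathbb{R}$, $\alpha > 0$, $B \ge 1$, and consider the problems (P1) minimize $f(X)$ subject to $X \ge 0$ and $X$ is block diagonal with at least $B$ blocks up to permutations; (P3) minimize $f(X) + \alpha \sum_{j=1}^B \lambda_{(j)}( L_{\text{sym}}(A_{\text{bp}}(X)))$ subject to $X \ge 0$; (P4) minimize over $(X, U) \in \mathbb{R}^{R\times C}\times \mathbb{R}^{(R + C) \times B}$ the objective $f(X) + \alpha \text{Tr} ( U^T L_{\text{un}}(A_{\text{bp}}(X)) U)$ subject to $X \ge 0$ and $U^T \text{diag}(\text{deg}(A_{\text{bp}}(X))) U = I_B$. 1. Suppose $X$ is a global (local) solution of (P3) such that $\sum_{j=1}^B \lambda_{(j)} ( L_{\text{sym}}(A_{\text{bp}}(X))) = 0$. Then $X$ is a global (local) solution of (P1). 2. Suppose $X$ is a global (local) solution of (P3) such that the largest $B$ row sums and the largest $B$ column sums of $X$ are strictly positive. Then there exists a coordinate-wise minimizer $U$ such that $(X, U)$ is a global (local) minimizer of (P4).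
   Context: $A_{\text{bp}}(X) = \begin{bmatrix} 0 & X \\ X^T & 0\end{bmatrix}$; for an adjacency matrix $A$, $\text{deg}(A) = A\mathbf{1}$, $L_{\text{un}}(A) = \text{diag}(\text{deg}(A)) - A$, $L_{\text{sym}}(A) = I - \text{diag}(\text{deg}(A))^{-1/2} A\, \text{diag}(\text{deg}(A))^{-1/2}$ (Moore–Penrose pseudo-inverse); $\lambda_{(j)}$ is the $j$-th smallest eigenvalue. Block diagonal up to permutations means rows/columns can be permuted to a block diagonal matrix with that many blocks, each containing a non-zero entry. *)

theory Defs
  imports "Jordan_Normal_Form.Matrix" "Jordan_Normal_Form.Char_Poly"
          "HOL-Computational_Algebra.Polynomial"
begin

(* bipartite adjacency A_bp(X) = [[0, X], [X^T, 0]], of size (R+C) x (R+C) *)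
definition A_bp :: "real mat \<Rightarrow> real mat" where
  "A_bp X = mat (dim_row X + dim_col X) (dim_row X + dim_col X)
     (\<lambda>(i,j). if i < dim_row X \<and> dim_row X \<le> j then X $$ (i, j - dim_row X)
             else if dim_row X \<le> i \<and> j < dim_row X then X $$ (j, i - dim_row X)
             else 0)"

definition deg :: "real mat \<Rightarrow> real vec" where
  "deg A = A *\<^sub>v (vec (dim_col A) (\<lambda>_. 1))"

definition diag_of_vec :: "real vec \<Rightarrow> real mat" where
  "diag_of_vec v = mat (dim_vec v) (dim_vec v) (\<lambda>(i,j). if i = j then v $ i else 0)"

definition L_un :: "real mat \<Rightarrow> real mat" where
  "L_un A = diag_of_vec (deg A) - A"

(* diag(deg A)^{-1/2}, Moore-Penrose pseudo-inverse: zero degrees give zero entries *)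
definition deg_inv_sqrt :: "real mat \<Rightarrow> real mat" where
  "deg_inv_sqrt A = mat (dim_row A) (dim_row A)
     (\<lambda>(i,j). if i = j \<and> deg A $ i \<noteq> 0 then 1 / sqrt (deg A $ i) else 0)"

definition L_sym :: "real mat \<Rightarrow> real mat" where
  "L_sym A = 1\<^sub>m (dim_row A) - deg_inv_sqrt A * A * deg_inv_sqrt A"

(* eigenvalues with multiplicity in increasing order (roots of the characteristic
   polynomial; for the real symmetric matrices used here it splits over the reals) *)
definition sorted_eigenvalues :: "real mat \<Rightarrow> real list" where
  "sorted_eigenvalues M = sorted_list_of_multiset (proots (char_poly M))"

definition eig_small :: "nat \<Rightarrow> real mat \<Rightarrow> real" where
  "eig_small j M = sorted_eigenvalues M ! (j - 1)"

definition mtrace :: "real mat \<Rightarrow> real" where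
  "mtrace M = (\<Sum>i<dim_row M. M $$ (i, i))"

definition nonneg_mat :: "real mat \<Rightarrow> bool" where
  "nonneg_mat X \<longleftrightarrow> (\<forall>i<dim_row X. \<forall>j<dim_col X. X $$ (i, j) \<ge> 0)"

(* entrywise max distance (all norms on R^{m x n} are equivalent) *)
definition mdist :: "real mat \<Rightarrow> real mat \<Rightarrow> real" where
  "mdist X Y = Max (insert 0 {\<bar>X $$ (i, j) - Y $$ (i, j)\<bar> | i j. i < dim_row X \<and> j < dim_col X})"

definition block_diag_perm :: "nat \<Rightarrow> real mat \<Rightarrow> bool" where
  "block_diag_perm B X \<longleftrightarrow>
    (\<exists>\<sigma> \<tau> (k::nat) (a::nat\<Rightarrow>nat) (b::nat\<Rightarrow>nat).
       \<sigma> permutes {..<dim_row X} \<and> \<tau> permutes {..<dim_col X} \<and> B \<le> k \<and>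
       a 0 = 0 \<and> a k = dim_row X \<and> b 0 = 0 \<and> b k = dim_col X \<and>
       (\<forall>l<k. a l < a (Suc l) \<and> b l < b (Suc l)) \<and>
       (\<forall>i<dim_row X. \<forall>j<dim_col X. X $$ (\<sigma> i, \<tau> j) \<noteq> 0 \<longrightarrow>
          (\<exists>l<k. a l \<le> i \<and> i < a (Suc l) \<and> b l \<le> j \<and> j < b (Suc l))) \<and>
       (\<forall>l<k. \<exists>i j. a l \<le> i \<and> i < a (Suc l) \<and> b l \<le> j \<and> j < b (Suc l) \<and>
          X $$ (\<sigma> i, \<tau> j) \<noteq> 0))"

definition feas1 :: "nat \<Rightarrow> nat \<Rightarrow> nat \<Rightarrow> real mat \<Rightarrow> bool" where
  "feas1 R C B X \<longleftrightarrow> X \<in> carrier_mat R C \<and> nonneg_mat X \<and> block_diag_perm B X"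

definition feas3 :: "nat \<Rightarrow> nat \<Rightarrow> real mat \<Rightarrow> bool" where
  "feas3 R C X \<longleftrightarrow> X \<in> carrier_mat R C \<and> nonneg_mat X"

definition obj3 :: "(real mat \<Rightarrow> real) \<Rightarrow> real \<Rightarrow> nat \<Rightarrow> real mat \<Rightarrow> real" where
  "obj3 f \<alpha> B X = f X + \<alpha> * (\<Sum>j=1..B. eig_small j (L_sym (A_bp X)))"

definition feas4 :: "nat \<Rightarrow> nat \<Rightarrow> nat \<Rightarrow> real mat \<Rightarrow> real mat \<Rightarrow> bool" where
  "feas4 R C B X U \<longleftrightarrow> X \<in> carrier_mat R C \<and> nonneg_mat X \<and> U \<in> carrier_mat (R + C) B \<and>
     transpose_mat U * diag_of_vec (deg (A_bp X)) * U = 1\<^sub>m B"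

definition obj4 :: "(real mat \<Rightarrow> real) \<Rightarrow> real \<Rightarrow> real mat \<Rightarrow> real mat \<Rightarrow> real" where
  "obj4 f \<alpha> X U = f X + \<alpha> * mtrace (transpose_mat U * L_un (A_bp X) * U)"

definition global_min :: "(real mat \<Rightarrow> bool) \<Rightarrow> (real mat \<Rightarrow> real) \<Rightarrow> real mat \<Rightarrow> bool" where
  "global_min F g X \<longleftrightarrow> F X \<and> (\<forall>Y. F Y \<longrightarrow> g X \<le> g Y)"

definition local_min :: "(real mat \<Rightarrow> bool) \<Rightarrow> (real mat \<Rightarrow> real) \<Rightarrow> real mat \<Rightarrow> bool" where
  "local_min F g X \<longleftrightarrow> F X \<and> (\<exists>\<epsilon>>0. \<forall>Y. F Y \<and> mdist X Y < \<epsilon> \<longrightarrow> g X \<le> g Y)"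

definition global_min2 :: "(real mat \<Rightarrow> real mat \<Rightarrow> bool) \<Rightarrow> (real mat \<Rightarrow> real mat \<Rightarrow> real)
    \<Rightarrow> real mat \<Rightarrow> real mat \<Rightarrow> bool" where
  "global_min2 F g X U \<longleftrightarrow> F X U \<and> (\<forall>Y V. F Y V \<longrightarrow> g X U \<le> g Y V)"

definition local_min2 :: "(real mat \<Rightarrow> real mat \<Rightarrow> bool) \<Rightarrow> (real mat \<Rightarrow> real mat \<Rightarrow> real)
    \<Rightarrow> real mat \<Rightarrow> real mat \<Rightarrow> bool" where
  "local_min2 F g X U \<longleftrightarrow> F X U \<and> (\<exists>\<epsilon>>0. \<forall>Y V. F Y V \<and> mdist X Y < \<epsilon> \<and> mdist U V < \<epsilon>
      \<longrightarrow> g X U \<le> g Y V)"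

definition coord_min :: "(real mat \<Rightarrow> real mat \<Rightarrow> bool) \<Rightarrow> (real mat \<Rightarrow> real mat \<Rightarrow> real)
    \<Rightarrow> real mat \<Rightarrow> real mat \<Rightarrow> bool" where
  "coord_min F g X U \<longleftrightarrow> F X U \<and> (\<forall>V. F X V \<longrightarrow> g X U \<le> g X V)"

definition row_sums :: "real mat \<Rightarrow> real list" where
  "row_sums X = map (\<lambda>i. \<Sum>j<dim_col X. X $$ (i, j)) [0..<dim_row X]"

definition col_sums :: "real mat \<Rightarrow> real list" where
  "col_sums X = map (\<lambda>j. \<Sum>i<dim_row X. X $$ (i, j)) [0..<dim_col X]"

definition largest_B_pos :: "nat \<Rightarrow> real list \<Rightarrow> bool" where
  "largest_B_pos B xs \<longleftrightarrow> (\<forall>j<B. j < length xs \<and> rev (sort xs) ! j > 0)"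

end

theory Submission
  imports Defs "HOL-Combinatorics.List_Permutation"
begin

lemma mat_vec_sum: "A \<in> carrier_mat n m \<Longrightarrow> v \<in> carrier_vec m \<Longrightarrow> i < n \<Longrightarrow>
   (A *\<^sub>v v) $ i = (\<Sum>j<m. A $$ (i,j) * v $ j)"
  by (auto simp: scalar_prod_def atLeast0LessThan intro!: sum.cong)

lemma real_sym_eigvec:
  fixes A :: "real mat"
  assumes A: "A \<in> carrier_mat n n" and n: "n > 0" and sym: "\<And>i j. i < n \<Longrightarrow> j < n \<Longrightarrow> A $$ (i,j) = A $$ (j,i)"
  shows "\<exists>e v. v \<in> carrier_vec n \<and> v \<noteq> 0\<^sub>v n \<and> A *\<^sub>v v = e \<cdot>\<^sub>v v"
proof -
  define Ac where "Ac = map_mat complex_of_real A"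
  have Ac: "Ac \<in> carrier_mat n n" using A by (auto simp: Ac_def)
  from char_poly_factorized[OF Ac] obtain as where
    cp: "char_poly Ac = (\<Prod>a\<leftarrow>as. [:- a, 1:])" and len: "length as = n" by auto
  from n len obtain a as' where as: "as = a # as'" by (cases as) auto
  have "poly (char_poly Ac) a = 0" unfolding cp as by simp
  hence "eigenvalue Ac a" using eigenvalue_root_char_poly[OF Ac] by simp
  then obtain vc where ev: "eigenvector Ac vc a" unfolding eigenvalue_def by auto
  hence vc: "vc \<in> carrier_vec n" "vc \<noteq> 0\<^sub>v n" "Ac *\<^sub>v vc = a \<cdot>\<^sub>v vc"
    unfolding eigenvector_def using Ac by auto
  have eq: "(\<Sum>j<n. complex_of_real (A $$ (i,j)) * vc $ j) = a * vc $ i" if i: "i < n" for i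
  proof -
    have "(Ac *\<^sub>v vc) $ i = (a \<cdot>\<^sub>v vc) $ i" using vc by simp
    thus ?thesis using mat_vec_sum[OF Ac vc(1) i] i A vc(1) by (simp add: Ac_def)
  qed
  define s where "s = (\<Sum>i<n. cnj (vc $ i) * (\<Sum>j<n. complex_of_real (A $$ (i,j)) * vc $ j))"
  define N where "N = (\<Sum>i<n. (cmod (vc $ i))^2)"
  have s1: "s = a * complex_of_real N"
  proof -
    have "s = (\<Sum>i<n. a * (cnj (vc $ i) * vc $ i))" unfolding s_def
      by (rule sum.cong, auto simp: eq)
    also have "\<dots> = a * (\<Sum>i<n. complex_of_real ((cmod (vc $ i))^2))"
      by (simp add: sum_distrib_left mult.commute[of "cnj _"] complex_norm_square[symmetric] del: of_real_power)
    finally show ?thesis unfolding N_def by simp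
  qed
  have s2: "cnj s = s"
  proof -
    have "cnj s = (\<Sum>i<n. \<Sum>j<n. vc $ i * complex_of_real (A $$ (i,j)) * cnj (vc $ j))"
      unfolding s_def by (simp add: sum_distrib_left mult.assoc)
    also have "\<dots> = (\<Sum>j<n. \<Sum>i<n. vc $ i * complex_of_real (A $$ (i,j)) * cnj (vc $ j))"
      by (rule sum.swap)
    also have "\<dots> = s" unfolding s_def sum_distrib_left
      by (intro sum.cong refl, auto simp: sym mult.commute mult.left_commute)
    finally show ?thesis .
  qed
  have Npos: "N > 0"
  proof -
    from vc(1,2) obtain k where k: "k < n" "vc $ k \<noteq> 0" by (auto simp: vec_eq_iff)
    have "(cmod (vc $ k))^2 \<le> N" unfolding N_def
      by (rule member_le_sum, use k in auto)
    moreover have "(cmod (vc $ k))^2 > 0" using k by simp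
    ultimately show ?thesis by linarith
  qed
  have ima: "Im a = 0"
  proof -
    from s2 have "Im s = 0" by (metis cnj.sel(2) equal_neg_zero)
    hence "Im a * N = 0" using s1 by simp
    thus ?thesis using Npos by simp
  qed
  define vr where "vr = vec n (\<lambda>i. Re (vc $ i))"
  define vi where "vi = vec n (\<lambda>i. Im (vc $ i))"
  have evr: "A *\<^sub>v vr = Re a \<cdot>\<^sub>v vr"
  proof (rule eq_vecI)
    fix i assume "i < dim_vec (Re a \<cdot>\<^sub>v vr)"
    hence i: "i < n" by (simp add: vr_def)
    have "Re (\<Sum>j<n. complex_of_real (A $$ (i,j)) * vc $ j) = Re (a * vc $ i)" using eq[OF i] by simp
    hence "(\<Sum>j<n. A $$ (i,j) * Re (vc $ j)) = Re a * Re (vc $ i)" using ima by (simp add: Re_sum)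
    thus "(A *\<^sub>v vr) $ i = (Re a \<cdot>\<^sub>v vr) $ i"
      using mat_vec_sum[OF A _ i, of vr] i by (simp add: vr_def)
  qed (use A in \<open>auto simp: vr_def\<close>)
  have evi: "A *\<^sub>v vi = Re a \<cdot>\<^sub>v vi"
  proof (rule eq_vecI)
    fix i assume "i < dim_vec (Re a \<cdot>\<^sub>v vi)"
    hence i: "i < n" by (simp add: vi_def)
    have "Im (\<Sum>j<n. complex_of_real (A $$ (i,j)) * vc $ j) = Im (a * vc $ i)" using eq[OF i] by simp
    hence "(\<Sum>j<n. A $$ (i,j) * Im (vc $ j)) = Re a * Im (vc $ i)" using ima by (simp add: Im_sum)
    thus "(A *\<^sub>v vi) $ i = (Re a \<cdot>\<^sub>v vi) $ i"
      using mat_vec_sum[OF A _ i, of vi] i by (simp add: vi_def)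
  qed (use A in \<open>auto simp: vi_def\<close>)
  from vc(1,2) obtain k where k: "k < n" "vc $ k \<noteq> 0" by (auto simp: vec_eq_iff)
  hence "Re (vc $ k) \<noteq> 0 \<or> Im (vc $ k) \<noteq> 0" using complex_eqI by force
  hence "vr \<noteq> 0\<^sub>v n \<or> vi \<noteq> 0\<^sub>v n" using k
    by (auto simp: vr_def vi_def vec_eq_iff)
  moreover have "vr \<in> carrier_vec n" "vi \<in> carrier_vec n" by (auto simp: vr_def vi_def)
  ultimately show ?thesis using evr evi by blast
qed

lemma mat_mult_sum: "A \<in> carrier_mat nr n \<Longrightarrow> B \<in> carrier_mat n nc \<Longrightarrow> i < nr \<Longrightarrow> j < nc \<Longrightarrow>
   (A * B) $$ (i,j) = (\<Sum>k<n. A $$ (i,k) * B $$ (k,j))"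
  by (auto simp: scalar_prod_def atLeast0LessThan intro!: sum.cong)

lemma householder:
  fixes v :: "real vec"
  assumes v: "v \<in> carrier_vec n" and n: "n > 0" and unit: "(\<Sum>i<n. (v $ i)^2) = 1"
  shows "\<exists>H. H \<in> carrier_mat n n \<and> H\<^sup>T = H \<and> H * H = 1\<^sub>m n \<and> col H 0 = v"
proof (cases "v $ 0 = 1")
  case True
  have split: "(\<Sum>i<n. (v $ i)^2) = (v $ 0)^2 + (\<Sum>i\<in>{1..<n}. (v $ i)^2)"
  proof -
    have "{..<n} = insert 0 {1..<n}" using n by auto
    thus ?thesis by simp
  qed
  hence "(\<Sum>i\<in>{1..<n}. (v $ i)^2) = 0" using unit True by simp
  hence z: "\<forall>i\<in>{1..<n}. (v $ i)^2 = 0" by (subst (asm) sum_nonneg_eq_0_iff) auto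
  have "v = unit_vec n 0"
  proof (rule eq_vecI)
    fix i assume "i < dim_vec (unit_vec n 0)"
    hence i: "i < n" by simp
    show "v $ i = unit_vec n 0 $ i"
    proof (cases "i = 0")
      case True thus ?thesis using \<open>v $ 0 = 1\<close> i by simp
    next
      case False thus ?thesis using z i by (auto simp: unit_vec_def)
    qed
  qed (use v in auto)
  thus ?thesis using n by (intro exI[of _ "1\<^sub>m n"]) (auto simp: col_one)
next
  case False
  define w where "w = (\<lambda>i. v $ i - (if i = 0 then 1 else 0))"
  define c where "c = 1 / (1 - v $ 0)"
  define H where "H = mat n n (\<lambda>(i,j). (if i = j then 1 else 0) - c * w i * w j)"
  have ww: "(\<Sum>k<n. (w k)^2) = 2 - 2 * v $ 0"
  proof -
    have "(\<Sum>k<n. (w k)^2) = (\<Sum>k<n. (v $ k)^2 - 2 * (if k = 0 then v $ k else 0) + (if k = 0 then 1 else 0))"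
    proof (rule sum.cong[OF refl])
      fix k show "(w k)^2 = (v $ k)^2 - 2 * (if k = 0 then v $ k else 0) + (if k = 0 then 1 else 0)"
        by (cases "k = 0") (simp_all add: w_def power2_eq_square algebra_simps)
    qed
    also have "\<dots> = (\<Sum>k<n. (v $ k)^2) - 2 * (\<Sum>k<n. if k = 0 then v $ k else 0) + (\<Sum>k<n. if k = 0 then 1 else 0)"
      by (simp only: sum.distrib sum_subtractf sum_distrib_left)
    also have "\<dots> = 2 - 2 * v $ 0" using n unit by simp
    finally show ?thesis .
  qed
  have cw: "c * (2 - 2 * v $ 0) = 2" using False by (simp add: c_def field_simps)
  have Hc: "H \<in> carrier_mat n n" by (simp add: H_def)
  have HT: "H\<^sup>T = H" by (rule eq_matI) (auto simp: H_def)
  have HH: "H * H = 1\<^sub>m n"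
  proof (rule eq_matI)
    fix i j assume "i < dim_row (1\<^sub>m n)" "j < dim_col (1\<^sub>m n)"
    hence i: "i < n" and j: "j < n" by auto
    have "(H * H) $$ (i,j) = (\<Sum>k<n. H $$ (i,k) * H $$ (k,j))" by (rule mat_mult_sum[OF Hc Hc i j])
    also have "\<dots> = (\<Sum>k<n. (if i = k then (if k = j then 1 else 0) else 0)
        - (if i = k then c * w k * w j else 0) - (if k = j then c * w i * w k else 0)
        + c * c * w i * w j * (w k)^2)"
    proof (rule sum.cong[OF refl])
      fix k assume "k \<in> {..<n}" hence k: "k < n" by simp
      show "H $$ (i,k) * H $$ (k,j) = (if i = k then (if k = j then 1 else 0) else 0)
        - (if i = k then c * w k * w j else 0) - (if k = j then c * w i * w k else 0)
        + c * c * w i * w j * (w k)^2"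
        using i j k by (cases "i = k"; cases "k = j") (simp_all add: H_def power2_eq_square algebra_simps)
    qed
    also have "\<dots> = (if i = j then 1 else 0) - c * w i * w j - c * w i * w j
        + c * c * w i * w j * (\<Sum>k<n. (w k)^2)"
      using i j by (simp add: sum.distrib sum_subtractf sum_distrib_left)
    also have "\<dots> = (if i = j then 1 else 0)"
    proof -
      have "c * c * w i * w j * (2 - 2 * v $ 0) = (c * (2 - 2 * v $ 0)) * (c * w i * w j)" by (simp only: mult_ac)
      thus ?thesis unfolding ww cw by simp
    qed
    finally show "(H * H) $$ (i,j) = 1\<^sub>m n $$ (i,j)" using i j by simp
  qed (auto simp: H_def)
  have col: "col H 0 = v"
  proof (rule eq_vecI)
    fix i assume "i < dim_vec v" hence i: "i < n" using v by simp
    have cw0: "c * w 0 = -1" using False by (simp add: c_def w_def field_simps)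
    have "c * w i * w 0 = w i * (c * w 0)" by (simp only: mult_ac)
    also have "\<dots> = - w i" unfolding cw0 by simp
    finally have "H $$ (i,0) = (if i = 0 then 1 else 0) + w i" using i n
      by (simp add: H_def)
    also have "\<dots> = v $ i" by (simp add: w_def)
    finally show "col H 0 $ i = v $ i" using i n Hc by simp
  qed (use v Hc in auto)
  show ?thesis using Hc HT HH col by blast
qed

lemma spectral_jnf:
  fixes A :: "real mat"
  assumes "A \<in> carrier_mat n n" "A\<^sup>T = A"
  shows "\<exists>Q D. Q \<in> carrier_mat n n \<and> D \<in> carrier_mat n n \<and> Q\<^sup>T * Q = 1\<^sub>m n \<and> diagonal_mat D \<and> A * Q = Q * D"
  using assms
proof (induction n arbitrary: A)
  case 0
  show ?case
    by (rule exI[of _ "1\<^sub>m 0"], rule exI[of _ "0\<^sub>m 0 0"]) (use 0 in \<open>auto simp: diagonal_mat_def intro!: eq_matI\<close>)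
next
  case (Suc m A)
  define n where "n = Suc m"
  have A: "A \<in> carrier_mat n n" using Suc n_def by simp
  have sym: "A $$ (i,j) = A $$ (j,i)" if "i < n" "j < n" for i j
  proof -
    have "A\<^sup>T $$ (i,j) = A $$ (j,i)" using that A by simp
    thus ?thesis using Suc(3) by simp
  qed
  obtain e v0 where v0: "v0 \<in> carrier_vec n" "v0 \<noteq> 0\<^sub>v n" "A *\<^sub>v v0 = e \<cdot>\<^sub>v v0"
    using real_sym_eigvec[OF A _ sym] n_def by auto
  define N where "N = (\<Sum>i<n. (v0 $ i)^2)"
  have Npos: "N > 0"
  proof -
    from v0(1,2) obtain k where k: "k < n" "v0 $ k \<noteq> 0" by (auto simp: vec_eq_iff)
    have "(v0 $ k)^2 \<le> N" unfolding N_def by (rule member_le_sum, use k in auto)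
    moreover have "(v0 $ k)^2 > 0" using k by simp
    ultimately show ?thesis by linarith
  qed
  define v where "v = (1 / sqrt N) \<cdot>\<^sub>v v0"
  have vc: "v \<in> carrier_vec n" using v0 by (simp add: v_def)
  have vunit: "(\<Sum>i<n. (v $ i)^2) = 1"
  proof -
    have "(\<Sum>i<n. (v $ i)^2) = (\<Sum>i<n. (v0 $ i)^2 / N)"
      by (rule sum.cong) (use v0 Npos in \<open>auto simp: v_def power_divide\<close>)
    also have "\<dots> = 1" using Npos by (simp add: N_def sum_divide_distrib[symmetric])
    finally show ?thesis .
  qed
  have Av: "A *\<^sub>v v = e \<cdot>\<^sub>v v"
    unfolding v_def using v0 A by (simp add: mult_mat_vec smult_smult_assoc mult.commute)
  obtain H where H: "H \<in> carrier_mat n n" "H\<^sup>T = H" "H * H = 1\<^sub>m n" "col H 0 = v"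
    using householder[OF vc _ vunit] n_def by auto
  define A' where "A' = H * A * H"
  have A'c: "A' \<in> carrier_mat n n" using H A by (simp add: A'_def)
  have A'T: "A'\<^sup>T = A'"
  proof -
    have "A'\<^sup>T = H\<^sup>T * (H * A)\<^sup>T" unfolding A'_def by (rule transpose_mult) (use H A in auto)
    also have "(H * A)\<^sup>T = A\<^sup>T * H\<^sup>T" by (rule transpose_mult) (use H A in auto)
    also have "H\<^sup>T * (A\<^sup>T * H\<^sup>T) = A'" unfolding A'_def H(2) Suc(3)
      by (rule assoc_mult_mat[symmetric]) (use H A in auto)
    finally show ?thesis .
  qed
  have colA': "col A' 0 = e \<cdot>\<^sub>v unit_vec n 0"
  proof -
    have "col A' 0 = (H * A) *\<^sub>v col H 0" unfolding A'_def
      by (rule col_mult2[of _ n n _ n], use H A n_def in auto)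
    also have "\<dots> = H *\<^sub>v (A *\<^sub>v v)" using H A vc by (simp add: assoc_mult_mat_vec[of _ n n _ n])
    also have "\<dots> = e \<cdot>\<^sub>v (H *\<^sub>v col H 0)" using H A vc Av by (simp add: mult_mat_vec[of _ n n])
    also have "H *\<^sub>v col H 0 = col (H * H) 0" by (rule col_mult2[symmetric], use H n_def in auto)
    also have "\<dots> = unit_vec n 0" using H n_def by (simp add: col_one)
    finally show ?thesis .
  qed
  have A'i0: "A' $$ (i,0) = (if i = 0 then e else 0)" if "i < n" for i
  proof -
    have "col A' 0 $ i = (e \<cdot>\<^sub>v unit_vec n 0) $ i" using colA' by simp
    thus ?thesis using that A'c n_def by (auto simp: unit_vec_def)
  qed
  have A'sym: "A' $$ (i,j) = A' $$ (j,i)" if "i < n" "j < n" for i j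
  proof -
    have "A'\<^sup>T $$ (i,j) = A' $$ (j,i)" using that A'c by simp
    thus ?thesis using A'T by simp
  qed
  define A3 where "A3 = mat m m (\<lambda>(i,j). A' $$ (Suc i, Suc j))"
  have A3c: "A3 \<in> carrier_mat m m" by (simp add: A3_def)
  have A3T: "A3\<^sup>T = A3"
    by (rule eq_matI) (auto simp: A3_def n_def intro!: A'sym)
  obtain Q3 D3 where Q3: "Q3 \<in> carrier_mat m m" "D3 \<in> carrier_mat m m" "Q3\<^sup>T * Q3 = 1\<^sub>m m"
     "diagonal_mat D3" "A3 * Q3 = Q3 * D3"
    using Suc.IH[OF A3c A3T] by blast
  define E where "E = mat 1 1 (\<lambda>_. e)"
  have Ec: "E \<in> carrier_mat 1 1" by (simp add: E_def)
  have A'blk: "A' = four_block_mat E (0\<^sub>m 1 m) (0\<^sub>m m 1) A3"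
  proof (rule eq_matI)
    fix i j assume ij: "i < dim_row (four_block_mat E (0\<^sub>m 1 m) (0\<^sub>m m 1) A3)"
       "j < dim_col (four_block_mat E (0\<^sub>m 1 m) (0\<^sub>m m 1) A3)"
    hence i: "i < n" and j: "j < n" by (auto simp: E_def A3_def n_def)
    show "A' $$ (i,j) = four_block_mat E (0\<^sub>m 1 m) (0\<^sub>m m 1) A3 $$ (i,j)"
    proof (cases "i = 0")
      case True thus ?thesis using A'i0[OF j] A'sym[OF i j] ij by (auto simp: E_def A3_def)
    next
      case False
      show ?thesis
      proof (cases "j = 0")
        case True thus ?thesis using A'i0[OF i] ij False by (auto simp: E_def A3_def)
      next
        case False
        thus ?thesis using \<open>i \<noteq> 0\<close> ij by (auto simp: E_def A3_def)
      qed
    qed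
  qed (use A'c n_def in \<open>auto simp: E_def A3_def\<close>)
  define Bk where "Bk = four_block_mat (1\<^sub>m 1) (0\<^sub>m 1 m) (0\<^sub>m m 1) Q3"
  have Bkc: "Bk \<in> carrier_mat n n" unfolding Bk_def n_def using Q3 by auto
  define Q where "Q = H * Bk"
  define D where "D = four_block_mat E (0\<^sub>m 1 m) (0\<^sub>m m 1) D3"
  have Qc: "Q \<in> carrier_mat n n" using H Bkc by (simp add: Q_def)
  have Dc: "D \<in> carrier_mat n n" unfolding D_def n_def using Q3 Ec by auto
  have BkT: "Bk\<^sup>T = four_block_mat (1\<^sub>m 1) (0\<^sub>m 1 m) (0\<^sub>m m 1) Q3\<^sup>T"
    unfolding Bk_def using Q3 by (subst transpose_four_block_mat[of _ 1 1 _ m _ m], auto)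
  have BkBk: "Bk\<^sup>T * Bk = 1\<^sub>m n"
  proof -
    have "Bk\<^sup>T * Bk = four_block_mat (1\<^sub>m 1) (0\<^sub>m 1 m) (0\<^sub>m m 1) Q3\<^sup>T * four_block_mat (1\<^sub>m 1) (0\<^sub>m 1 m) (0\<^sub>m m 1) Q3"
      by (subst BkT, unfold Bk_def, rule refl)
    also have "\<dots> = four_block_mat (1\<^sub>m 1 * 1\<^sub>m 1 + 0\<^sub>m 1 m * 0\<^sub>m m 1) (1\<^sub>m 1 * 0\<^sub>m 1 m + 0\<^sub>m 1 m * Q3)
       (0\<^sub>m m 1 * 1\<^sub>m 1 + Q3\<^sup>T * 0\<^sub>m m 1) (0\<^sub>m m 1 * 0\<^sub>m 1 m + Q3\<^sup>T * Q3)"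
      by (rule mult_four_block_mat, use Q3 in auto)
    also have "\<dots> = four_block_mat (1\<^sub>m 1) (0\<^sub>m 1 m) (0\<^sub>m m 1) (1\<^sub>m m)"
      using Q3 by simp
    also have "\<dots> = 1\<^sub>m n" unfolding four_block_one_mat n_def by simp
    finally show ?thesis .
  qed
  have HH': "H * (H * X) = X" if "X \<in> carrier_mat n n" for X
  proof -
    have "H * (H * X) = (H * H) * X" by (rule assoc_mult_mat[symmetric]) (use H that in auto)
    thus ?thesis using H that by simp
  qed
  have QQ: "Q\<^sup>T * Q = 1\<^sub>m n"
  proof -
    have "Q\<^sup>T * Q = (Bk\<^sup>T * H\<^sup>T) * (H * Bk)" unfolding Q_def using H Bkc by (simp add: transpose_mult[of _ n n])
    also have "\<dots> = Bk\<^sup>T * (H * (H * Bk))" using H Bkc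
      by (simp add: assoc_mult_mat[of _ n n _ n _ n])
    also have "\<dots> = Bk\<^sup>T * Bk" using HH'[OF Bkc] by simp
    finally show ?thesis using BkBk by simp
  qed
  have HA': "H * A' = A * H"
    unfolding A'_def using H A HH' by (simp add: assoc_mult_mat[of _ n n _ n _ n])
  have A'Bk: "A' * Bk = four_block_mat E (0\<^sub>m 1 m) (0\<^sub>m m 1) (A3 * Q3)"
  proof -
    have "A' * Bk = four_block_mat (E * 1\<^sub>m 1 + 0\<^sub>m 1 m * 0\<^sub>m m 1) (E * 0\<^sub>m 1 m + 0\<^sub>m 1 m * Q3)
       (0\<^sub>m m 1 * 1\<^sub>m 1 + A3 * 0\<^sub>m m 1) (0\<^sub>m m 1 * 0\<^sub>m 1 m + A3 * Q3)"
      unfolding A'blk Bk_def by (rule mult_four_block_mat, use Q3 Ec A3c in auto)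
    also have "\<dots> = four_block_mat E (0\<^sub>m 1 m) (0\<^sub>m m 1) (A3 * Q3)"
      using Q3 Ec A3c by simp
    finally show ?thesis .
  qed
  have BkD: "Bk * D = four_block_mat E (0\<^sub>m 1 m) (0\<^sub>m m 1) (Q3 * D3)"
  proof -
    have "Bk * D = four_block_mat (1\<^sub>m 1 * E + 0\<^sub>m 1 m * 0\<^sub>m m 1) (1\<^sub>m 1 * 0\<^sub>m 1 m + 0\<^sub>m 1 m * D3)
       (0\<^sub>m m 1 * E + Q3 * 0\<^sub>m m 1) (0\<^sub>m m 1 * 0\<^sub>m 1 m + Q3 * D3)"
      unfolding D_def Bk_def by (rule mult_four_block_mat, use Q3 Ec in auto)
    also have "\<dots> = four_block_mat E (0\<^sub>m 1 m) (0\<^sub>m m 1) (Q3 * D3)"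
      using Q3 Ec by simp
    finally show ?thesis .
  qed
  have AQ: "A * Q = Q * D"
  proof -
    have "A * Q = H * (A' * Bk)" unfolding Q_def A'_def using A H Bkc HH'
      by (simp add: assoc_mult_mat[of _ n n _ n _ n])
    also have "A' * Bk = Bk * D" unfolding A'Bk BkD Q3(5) ..
    also have "H * (Bk * D) = Q * D" unfolding Q_def using H Bkc Dc
      by (simp add: assoc_mult_mat[of _ n n _ n _ n])
    finally show ?thesis .
  qed
  have diag: "diagonal_mat D"
    unfolding diagonal_mat_def
  proof (intro allI impI)
    fix i j assume ij: "i < dim_row D" "j < dim_col D" "i \<noteq> j"
    thus "D $$ (i,j) = 0" using Q3(2,4) unfolding D_def diagonal_mat_def
      by (auto simp: E_def)
  qed
  show ?case using Qc Dc QQ diag AQ n_def by blast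
qed

lemma proots_linear_prod: "proots (\<Prod>a\<leftarrow>ds. [:- a, 1:]) = mset (ds :: real list)"
proof (induction ds)
  case (Cons a ds)
  have nz: "prod_list (map (\<lambda>x. [:- x, 1:]) ds) \<noteq> (0::real poly)" by (auto simp: prod_list_zero_iff)
  have "proots (prod_list (map (\<lambda>x. [:- x, 1:]) (a # ds))) = proots ([:- a, 1:] * prod_list (map (\<lambda>x. [:- x, 1:]) ds))"
    by (simp only: list.map prod_list.Cons)
  also have "\<dots> = proots [:- a, 1:] + proots (prod_list (map (\<lambda>x. [:- x, 1:]) ds))"
    by (rule proots_mult) (use nz in auto)
  also have "\<dots> = add_mset a (mset ds)" using Cons.IH by (simp add: proots_linear_factor)
  finally show ?case by simp
qed simp

lemma eig_decomp:
  fixes M :: "real mat"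
  assumes M: "M \<in> carrier_mat n n" and sym: "\<And>i j. i < n \<Longrightarrow> j < n \<Longrightarrow> M $$ (i,j) = M $$ (j,i)"
  shows "\<exists>q lam. (\<forall>i<n. \<forall>j<n. (\<Sum>k<n. q i k * q j k) = (if i = j then 1 else 0)) \<and>
     (\<forall>i<n. \<forall>r<n. (\<Sum>k<n. M $$ (r,k) * q i k) = lam i * q i r) \<and>
     (\<forall>r<n. \<forall>s<n. (\<Sum>i<n. q i r * q i s) = (if r = s then 1 else 0)) \<and>
     (\<forall>i j. i \<le> j \<longrightarrow> j < n \<longrightarrow> lam i \<le> (lam j :: real)) \<and>
     length (sorted_eigenvalues M) = n \<and> (\<forall>i<n. sorted_eigenvalues M ! i = lam i)"
proof -
  have MT: "M\<^sup>T = M" by (rule eq_matI) (use M sym in auto)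
  obtain Q D where QD: "Q \<in> carrier_mat n n" "D \<in> carrier_mat n n" "Q\<^sup>T * Q = 1\<^sub>m n" "diagonal_mat D" "M * Q = Q * D"
    using spectral_jnf[OF M MT] by blast
  have QQT: "Q * Q\<^sup>T = 1\<^sub>m n" by (rule mat_mult_left_right_inverse[OF _ _ QD(3)]) (use QD in auto)
  have MQ: "M = Q * D * Q\<^sup>T"
  proof -
    have "M = M * (Q * Q\<^sup>T)" using M QQT by simp
    also have "\<dots> = (M * Q) * Q\<^sup>T" by (rule assoc_mult_mat[symmetric]) (use M QD in auto)
    finally show ?thesis using QD by simp
  qed
  have sim: "similar_mat M D"
    by (rule similar_matI[where ?P = Q and ?Q = "Q\<^sup>T" and n = n]) (use M QD QQT MQ in auto)
  have ut: "upper_triangular D" using QD(2,4) unfolding upper_triangular_def diagonal_mat_def by auto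
  define ds where "ds = diag_mat D"
  have cp: "char_poly M = (\<Prod>a\<leftarrow>ds. [:- a, 1:])"
    unfolding char_poly_similar[OF sim] ds_def by (rule char_poly_upper_triangular[OF QD(2) ut])
  have se: "sorted_eigenvalues M = sort ds"
    unfolding sorted_eigenvalues_def cp proots_linear_prod sorted_list_of_multiset_mset ..
  have lends: "length ds = n" using QD(2) by (simp add: ds_def diag_mat_def)
  have dsi: "ds ! i = D $$ (i,i)" if "i < n" for i using that QD(2) by (simp add: ds_def diag_mat_def)
  obtain f where f: "bij_betw f {..<length (sort ds)} {..<length ds}" "\<forall>i<length (sort ds). sort ds ! i = ds ! f i"
    using permutation_Ex_bij[of "sort ds" ds] by auto
  have fb: "bij_betw f {..<n} {..<n}" using f lends by simp
  have fi: "f i < n" if "i < n" for i using fb that by (auto dest: bij_betwE)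
  have finj: "f i = f j \<longleftrightarrow> i = j" if "i < n" "j < n" for i j
    using fb that unfolding bij_betw_def inj_on_def by auto
  define q where "q = (\<lambda>i k. Q $$ (k, f i))"
  define lam where "lam = (\<lambda>i. sort ds ! i)"
  have P1: "\<forall>i<n. \<forall>j<n. (\<Sum>k<n. q i k * q j k) = (if i = j then 1 else 0)"
  proof (intro allI impI)
    fix i j assume i: "i < n" and j: "j < n"
    have "(Q\<^sup>T * Q) $$ (f i, f j) = (\<Sum>k<n. Q\<^sup>T $$ (f i, k) * Q $$ (k, f j))"
      by (rule mat_mult_sum) (use QD fi i j in auto)
    also have "\<dots> = (\<Sum>k<n. q i k * q j k)" unfolding q_def
      by (rule sum.cong) (use QD fi i j in auto)
    finally show "(\<Sum>k<n. q i k * q j k) = (if i = j then 1 else 0)"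
      using QD(3) fi[OF i] fi[OF j] finj[OF i j] by simp
  qed
  have P2: "\<forall>i<n. \<forall>r<n. (\<Sum>k<n. M $$ (r,k) * q i k) = lam i * q i r"
  proof (intro allI impI)
    fix i r assume i: "i < n" and r: "r < n"
    have "(\<Sum>k<n. M $$ (r,k) * q i k) = (M * Q) $$ (r, f i)" unfolding q_def
      by (rule mat_mult_sum[symmetric]) (use M QD fi i r in auto)
    also have "\<dots> = (Q * D) $$ (r, f i)" using QD by simp
    also have "\<dots> = (\<Sum>k<n. Q $$ (r,k) * D $$ (k, f i))"
      by (rule mat_mult_sum) (use QD fi i r in auto)
    also have "\<dots> = (\<Sum>k<n. if k = f i then Q $$ (r,k) * D $$ (k, f i) else 0)"
      by (rule sum.cong) (use QD(2,4) fi[OF i] in \<open>auto simp: diagonal_mat_def\<close>)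
    also have "\<dots> = Q $$ (r, f i) * D $$ (f i, f i)" using fi[OF i] by simp
    also have "D $$ (f i, f i) = lam i" unfolding lam_def using f(2) lends i dsi[OF fi[OF i]] by simp
    finally show "(\<Sum>k<n. M $$ (r,k) * q i k) = lam i * q i r" by (simp add: q_def)
  qed
  have P3: "\<forall>r<n. \<forall>s<n. (\<Sum>i<n. q i r * q i s) = (if r = s then 1 else 0)"
  proof (intro allI impI)
    fix r s assume r: "r < n" and s: "s < n"
    have "(\<Sum>i<n. q i r * q i s) = (\<Sum>k\<in>f ` {..<n}. Q $$ (r,k) * Q $$ (s,k))"
    proof -
      have "inj_on f {..<n}" using fb by (simp add: bij_betw_def)
      from sum.reindex[OF this, of "\<lambda>k. Q $$ (r,k) * Q $$ (s,k)"]
      show ?thesis unfolding q_def by simp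
    qed
    also have "f ` {..<n} = {..<n}" using fb by (simp add: bij_betw_def)
    also have "(\<Sum>k\<in>{..<n}. Q $$ (r,k) * Q $$ (s,k)) = (\<Sum>k<n. Q $$ (r,k) * Q\<^sup>T $$ (k,s))"
      by (rule sum.cong) (use QD r s in auto)
    also have "\<dots> = (Q * Q\<^sup>T) $$ (r,s)" by (rule mat_mult_sum[symmetric]) (use QD r s in auto)
    finally show "(\<Sum>i<n. q i r * q i s) = (if r = s then 1 else 0)" using QQT r s by simp
  qed
  have P4: "\<forall>i j. i \<le> j \<longrightarrow> j < n \<longrightarrow> lam i \<le> lam j"
    unfolding lam_def using lends by (auto intro: sorted_nth_mono)
  have P5: "length (sorted_eigenvalues M) = n" "\<forall>i<n. sorted_eigenvalues M ! i = lam i"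
    unfolding se lam_def using lends by auto
  show ?thesis using P1 P2 P3 P4 P5 by blast
qed

definition dotn :: "nat \<Rightarrow> (nat \<Rightarrow> real) \<Rightarrow> (nat \<Rightarrow> real) \<Rightarrow> real" where
  "dotn n x y = (\<Sum>k<n. x k * y k)"

definition mulv :: "nat \<Rightarrow> real mat \<Rightarrow> (nat \<Rightarrow> real) \<Rightarrow> nat \<Rightarrow> real" where
  "mulv n M x = (\<lambda>r. \<Sum>k<n. M $$ (r,k) * x k)"

definition symm :: "nat \<Rightarrow> real mat \<Rightarrow> bool" where
  "symm n M \<longleftrightarrow> (\<forall>i<n. \<forall>j<n. M $$ (i,j) = M $$ (j,i))"

definition orthon :: "nat \<Rightarrow> nat \<Rightarrow> (nat \<Rightarrow> nat \<Rightarrow> real) \<Rightarrow> bool" where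
  "orthon n m w \<longleftrightarrow> (\<forall>i<m. \<forall>j<m. dotn n (w i) (w j) = (if i = j then 1 else 0))"

definition eigbasis :: "nat \<Rightarrow> real mat \<Rightarrow> (nat \<Rightarrow> nat \<Rightarrow> real) \<Rightarrow> (nat \<Rightarrow> real) \<Rightarrow> bool" where
  "eigbasis n M q lam \<longleftrightarrow> orthon n n q \<and> (\<forall>i<n. \<forall>r<n. mulv n M (q i) r = lam i * q i r) \<and>
     (\<forall>r<n. \<forall>s<n. (\<Sum>i<n. q i r * q i s) = (if r = s then 1 else 0))"

lemma dotn_comm: "dotn n x y = dotn n y x"
  by (simp add: dotn_def mult.commute)

lemma sum_delta_mult: "r < n \<Longrightarrow> (\<Sum>k<n. x k * (if k = r then 1 else 0)) = ((x :: nat \<Rightarrow> real) r)"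
proof -
  assume r: "r < n"
  have "(\<Sum>k<n. x k * (if k = r then 1 else 0)) = (\<Sum>k<n. if k = r then x k else 0)"
    by (rule sum.cong) auto
  also have "\<dots> = x r" using r by (subst sum.delta) auto
  finally show ?thesis .
qed

lemma sum_delta_mult': "r < n \<Longrightarrow> (\<Sum>k<n. x k * (if r = k then 1 else 0)) = ((x :: nat \<Rightarrow> real) r)"
proof -
  assume r: "r < n"
  have "(\<Sum>k<n. x k * (if r = k then 1 else 0)) = (\<Sum>k<n. if r = k then x k else 0)"
    by (rule sum.cong) auto
  also have "\<dots> = x r" using r by (subst sum.delta') auto
  finally show ?thesis .
qed

lemma expansion:
  assumes E: "eigbasis n M q lam" and r: "r < n"
  shows "x r = (\<Sum>i<n. dotn n x (q i) * q i r)"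
proof -
  have "(\<Sum>i<n. dotn n x (q i) * q i r) = (\<Sum>i<n. \<Sum>k<n. x k * (q i k * q i r))"
    by (simp add: dotn_def sum_distrib_right mult.assoc)
  also have "\<dots> = (\<Sum>k<n. x k * (\<Sum>i<n. q i k * q i r))"
    by (subst sum.swap) (simp add: sum_distrib_left)
  also have "\<dots> = (\<Sum>k<n. x k * (if k = r then 1 else 0))"
    using E r unfolding eigbasis_def by (intro sum.cong) auto
  also have "\<dots> = x r" using sum_delta_mult[OF r] .
  finally show ?thesis by simp
qed

lemma parseval:
  assumes E: "eigbasis n M q lam"
  shows "dotn n x y = (\<Sum>i<n. dotn n x (q i) * dotn n y (q i))"
proof -
  have "dotn n x y = (\<Sum>r<n. x r * y r)" by (simp add: dotn_def)
  also have "\<dots> = (\<Sum>r<n. (\<Sum>i<n. dotn n x (q i) * q i r) * y r)"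
  proof (rule sum.cong[OF refl])
    fix r assume "r \<in> {..<n}"
    thus "x r * y r = (\<Sum>i<n. dotn n x (q i) * q i r) * y r" using expansion[OF E, of r x] by simp
  qed
  also have "\<dots> = (\<Sum>i<n. dotn n x (q i) * (\<Sum>r<n. y r * q i r))"
    by (simp add: sum_distrib_right sum_distrib_left mult_ac) (rule sum.swap)
  also have "\<dots> = (\<Sum>i<n. dotn n x (q i) * dotn n y (q i))" by (simp add: dotn_def)
  finally show ?thesis .
qed

lemma dot_mulv_symm:
  assumes S: "symm n M"
  shows "dotn n x (mulv n M y) = dotn n (mulv n M x) y"
proof -
  have "dotn n x (mulv n M y) = (\<Sum>r<n. \<Sum>k<n. x r * M $$ (r,k) * y k)"
    by (simp add: dotn_def mulv_def sum_distrib_left mult.assoc)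
  also have "\<dots> = (\<Sum>k<n. \<Sum>r<n. x r * M $$ (r,k) * y k)" by (rule sum.swap)
  also have "\<dots> = dotn n (mulv n M x) y"
    unfolding dotn_def mulv_def sum_distrib_right
    by (intro sum.cong refl) (use S in \<open>auto simp: symm_def mult_ac\<close>)
  finally show ?thesis .
qed

lemma dot_mulv_eig:
  assumes E: "eigbasis n M q lam" and S: "symm n M" and i: "i < n"
  shows "dotn n (mulv n M x) (q i) = lam i * dotn n x (q i)"
proof -
  have "dotn n (mulv n M x) (q i) = dotn n x (mulv n M (q i))"
    using dot_mulv_symm[OF S, of x "q i"] by simp
  also have "\<dots> = (\<Sum>r<n. x r * (lam i * q i r))"
    unfolding dotn_def by (rule sum.cong) (use E i in \<open>auto simp: eigbasis_def\<close>)
  also have "\<dots> = lam i * dotn n x (q i)" by (simp add: dotn_def sum_distrib_left mult_ac)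
  finally show ?thesis .
qed

lemma rayleigh:
  assumes E: "eigbasis n M q lam" and S: "symm n M"
  shows "dotn n x (mulv n M x) = (\<Sum>i<n. lam i * (dotn n x (q i))^2)"
proof -
  have "dotn n x (mulv n M x) = (\<Sum>i<n. dotn n x (q i) * dotn n (mulv n M x) (q i))"
    by (rule parseval[OF E])
  also have "\<dots> = (\<Sum>i<n. lam i * (dotn n x (q i))^2)"
    by (rule sum.cong) (auto simp: dot_mulv_eig[OF E S] power2_eq_square)
  finally show ?thesis .
qed

lemma bessel:
  assumes O: "orthon n m w"
  shows "(\<Sum>j<m. (dotn n x (w j))^2) \<le> dotn n x x"
proof -
  define c where "c j = dotn n x (w j)" for j
  define z where "z r = (\<Sum>j<m. c j * w j r)" for r
  have xz: "dotn n x z = (\<Sum>j<m. (c j)^2)"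
  proof -
    have "dotn n x z = (\<Sum>j<m. c j * dotn n x (w j))"
      unfolding dotn_def z_def by (simp add: sum_distrib_left sum.swap[of _ "{..<n}"] mult_ac)
    thus ?thesis by (simp add: c_def power2_eq_square)
  qed
  have zz: "dotn n z z = (\<Sum>j<m. (c j)^2)"
  proof -
    have "dotn n z z = (\<Sum>j<m. c j * dotn n (w j) z)"
      unfolding dotn_def z_def by (simp add: sum_distrib_left sum_distrib_right sum.swap[of _ "{..<n}"] mult_ac)
    also have "\<dots> = (\<Sum>j<m. c j * (\<Sum>l<m. c l * dotn n (w j) (w l)))"
      unfolding z_def dotn_def by (simp add: sum_distrib_left sum.swap[of _ "{..<n}"] mult_ac)
    also have "\<dots> = (\<Sum>j<m. c j * (\<Sum>l<m. c l * (if l = j then 1 else 0)))"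
      using O unfolding orthon_def by (intro sum.cong refl) (auto simp: eq_commute)
    also have "\<dots> = (\<Sum>j<m. (c j)^2)"
      by (rule sum.cong) (auto simp: sum_delta_mult power2_eq_square)
    finally show ?thesis .
  qed
  have "0 \<le> (\<Sum>r<n. (x r - z r)^2)" by (simp add: sum_nonneg)
  also have "\<dots> = dotn n x x - 2 * dotn n x z + dotn n z z"
    by (simp add: dotn_def power2_eq_square algebra_simps sum.distrib sum_subtractf sum_distrib_left)
  finally show ?thesis using xz zz by (simp add: c_def)
qed

lemma bessel_count:
  fixes e :: "'a \<Rightarrow> nat \<Rightarrow> real"
  assumes Op: "orthon n m p" and I: "finite I"
    and Oe: "\<And>c. c \<in> I \<Longrightarrow> dotn n (e c) (e c) = 1"
    and Oe2: "\<And>c d. c \<in> I \<Longrightarrow> d \<in> I \<Longrightarrow> c \<noteq> d \<Longrightarrow> dotn n (e c) (e d) = 0"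
    and span: "\<And>j. j < m \<Longrightarrow> dotn n (p j) (p j) = (\<Sum>c\<in>I. (dotn n (p j) (e c))^2)"
  shows "m \<le> card I"
proof -
  have "real m = (\<Sum>j<m. dotn n (p j) (p j))" using Op unfolding orthon_def by simp
  also have "\<dots> = (\<Sum>j<m. \<Sum>c\<in>I. (dotn n (p j) (e c))^2)" by (rule sum.cong) (auto simp: span)
  also have "\<dots> = (\<Sum>c\<in>I. \<Sum>j<m. (dotn n (e c) (p j))^2)" by (subst sum.swap) (simp add: dotn_comm)
  also have "\<dots> \<le> (\<Sum>c\<in>I. dotn n (e c) (e c))" by (rule sum_mono) (rule bessel[OF Op])
  also have "\<dots> = real (card I)" using Oe by simp
  finally show ?thesis by simp
qed

lemma eigvec_coeff_zero:
  assumes E: "eigbasis n M q lam" and S: "symm n M" and i: "i < n"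
    and p: "\<And>r. r < n \<Longrightarrow> mulv n M p r = \<mu> * p r" and ne: "lam i \<noteq> \<mu>"
  shows "dotn n p (q i) = 0"
proof -
  have "lam i * dotn n p (q i) = dotn n (mulv n M p) (q i)" using dot_mulv_eig[OF E S i] by simp
  also have "\<dots> = \<mu> * dotn n p (q i)" unfolding dotn_def by (simp add: p sum_distrib_left mult_ac)
  finally show ?thesis using ne by simp
qed

lemma eigvec_norm_restrict:
  assumes E: "eigbasis n M q lam" and S: "symm n M"
    and p: "\<And>r. r < n \<Longrightarrow> mulv n M p r = \<mu> * p r" and P: "P \<mu>"
  shows "dotn n p p = (\<Sum>i\<in>{i. i < n \<and> P (lam i)}. (dotn n p (q i))^2)"
proof -
  have "dotn n p p = (\<Sum>i<n. (dotn n p (q i))^2)" using parseval[OF E, of p p] by (simp add: power2_eq_square)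
  also have "\<dots> = (\<Sum>i\<in>{i. i < n \<and> P (lam i)}. (dotn n p (q i))^2)"
  proof (rule sum.mono_neutral_right)
    show "\<forall>i\<in>{..<n} - {i. i < n \<and> P (lam i)}. (dotn n p (q i))^2 = 0"
    proof
      fix i assume "i \<in> {..<n} - {i. i < n \<and> P (lam i)}"
      hence i: "i < n" and np: "\<not> P (lam i)" by auto
      hence "lam i \<noteq> \<mu>" using P by auto
      thus "(dotn n p (q i))^2 = 0" using eigvec_coeff_zero[OF E S i p] by simp
    qed
  qed auto
  finally show ?thesis .
qed

lemma rearrangement:
  fixes lam p :: "nat \<Rightarrow> real"
  assumes sorted: "\<And>i j. i \<le> j \<Longrightarrow> j < n \<Longrightarrow> lam i \<le> lam j"
    and p0: "\<And>i. i < n \<Longrightarrow> 0 \<le> p i" and p1: "\<And>i. i < n \<Longrightarrow> p i \<le> 1"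
    and ps: "(\<Sum>i<n. p i) = real B" and B: "1 \<le> B" "B \<le> n"
  shows "(\<Sum>i<B. lam i) \<le> (\<Sum>i<n. lam i * p i)"
proof -
  define t where "t = lam (B - 1)"
  have split: "{..<n} = {..<B} \<union> {B..<n}" using B by auto
  have disj: "{..<B} \<inter> {B..<n} = {}" by auto
  have a: "(\<Sum>i<B. lam i * (p i - 1)) \<ge> (\<Sum>i<B. t * (p i - 1))"
  proof (rule sum_mono)
    fix i assume "i \<in> {..<B}"
    hence i: "i < B" by simp
    have "lam i \<le> t" unfolding t_def by (rule sorted) (use i B in auto)
    moreover have "p i - 1 \<le> 0" using p1[of i] i B by simp
    ultimately show "t * (p i - 1) \<le> lam i * (p i - 1)" by (simp add: mult_right_mono_neg)
  qed
  have b: "(\<Sum>i\<in>{B..<n}. lam i * p i) \<ge> (\<Sum>i\<in>{B..<n}. t * p i)"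
  proof (rule sum_mono)
    fix i assume "i \<in> {B..<n}"
    hence i: "B \<le> i" "i < n" by auto
    have "t \<le> lam i" unfolding t_def by (rule sorted) (use i B in auto)
    thus "t * p i \<le> lam i * p i" using p0[of i] i by (simp add: mult_right_mono)
  qed
  have "(\<Sum>i<n. lam i * p i) = (\<Sum>i<B. lam i * p i) + (\<Sum>i\<in>{B..<n}. lam i * p i)"
    unfolding split by (rule sum.union_disjoint) auto
  also have "(\<Sum>i<B. lam i * p i) = (\<Sum>i<B. lam i) + (\<Sum>i<B. lam i * (p i - 1))"
    by (simp add: algebra_simps sum.distrib sum_subtractf)
  finally have eq: "(\<Sum>i<n. lam i * p i) = (\<Sum>i<B. lam i) + (\<Sum>i<B. lam i * (p i - 1)) + (\<Sum>i\<in>{B..<n}. lam i * p i)" by simp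
  have "(\<Sum>i<B. t * (p i - 1)) + (\<Sum>i\<in>{B..<n}. t * p i) = t * ((\<Sum>i<n. p i) - B)"
  proof -
    have "(\<Sum>i<n. p i) = (\<Sum>i<B. p i) + (\<Sum>i\<in>{B..<n}. p i)"
      unfolding split by (rule sum.union_disjoint) auto
    thus ?thesis by (simp add: sum_distrib_left[symmetric] sum_subtractf algebra_simps)
  qed
  also have "\<dots> = 0" using ps by simp
  finally show ?thesis using eq a b by linarith
qed

lemma ky_fan:
  assumes E: "eigbasis n M q lam" and S: "symm n M"
    and sorted: "\<And>i j. i \<le> j \<Longrightarrow> j < n \<Longrightarrow> lam i \<le> lam j"
    and O: "orthon n B w" and B: "1 \<le> B" "B \<le> n"
  shows "(\<Sum>i<B. lam i) \<le> (\<Sum>j<B. dotn n (w j) (mulv n M (w j)))"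
proof -
  define p where "p i = (\<Sum>j<B. (dotn n (w j) (q i))^2)" for i
  have "(\<Sum>j<B. dotn n (w j) (mulv n M (w j))) = (\<Sum>j<B. \<Sum>i<n. lam i * (dotn n (w j) (q i))^2)"
    by (rule sum.cong) (auto simp: rayleigh[OF E S])
  also have "\<dots> = (\<Sum>i<n. lam i * p i)" unfolding p_def
    by (subst sum.swap) (simp add: sum_distrib_left)
  finally have eq: "(\<Sum>j<B. dotn n (w j) (mulv n M (w j))) = (\<Sum>i<n. lam i * p i)" .
  have p0: "0 \<le> p i" for i unfolding p_def by (simp add: sum_nonneg)
  have p1: "p i \<le> 1" if i: "i < n" for i
  proof -
    have "p i = (\<Sum>j<B. (dotn n (q i) (w j))^2)" unfolding p_def by (simp add: dotn_comm)
    also have "\<dots> \<le> dotn n (q i) (q i)" by (rule bessel[OF O])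
    also have "\<dots> = 1" using E i unfolding eigbasis_def orthon_def by simp
    finally show ?thesis .
  qed
  have ps: "(\<Sum>i<n. p i) = real B"
  proof -
    have "(\<Sum>i<n. p i) = (\<Sum>j<B. \<Sum>i<n. (dotn n (w j) (q i))^2)" unfolding p_def by (rule sum.swap)
    also have "\<dots> = (\<Sum>j<B. dotn n (w j) (w j))"
      by (rule sum.cong) (auto simp: parseval[OF E, of "w _" "w _"] power2_eq_square)
    also have "\<dots> = real B" using O unfolding orthon_def by simp
    finally show ?thesis .
  qed
  show ?thesis unfolding eq by (rule rearrangement[OF sorted p0 p1 ps B]) auto
qed

definition dg :: "real mat \<Rightarrow> nat \<Rightarrow> real" where
  "dg A i = (\<Sum>j<dim_col A. A $$ (i,j))"

definition sq :: "real mat \<Rightarrow> nat \<Rightarrow> real" where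
  "sq A i = (if dg A i \<noteq> 0 then 1 / sqrt (dg A i) else 0)"

definition nonneg_sq :: "nat \<Rightarrow> real mat \<Rightarrow> bool" where
  "nonneg_sq n A \<longleftrightarrow> A \<in> carrier_mat n n \<and> symm n A \<and> (\<forall>i<n. \<forall>j<n. A $$ (i,j) \<ge> 0)"

lemma deg_idx: "A \<in> carrier_mat n n \<Longrightarrow> i < n \<Longrightarrow> deg A $ i = dg A i"
  unfolding deg_def dg_def using mat_vec_sum[of A n n "vec n (\<lambda>_. 1)" i] by simp

lemma deg_dim: "A \<in> carrier_mat n n \<Longrightarrow> dim_vec (deg A) = n"
  unfolding deg_def by simp

lemma dg_nonneg: "nonneg_sq n A \<Longrightarrow> i < n \<Longrightarrow> dg A i \<ge> 0"
  unfolding nonneg_sq_def dg_def by (auto intro: sum_nonneg)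

lemma dg_zero: assumes "nonneg_sq n A" "i < n" "dg A i = 0" "j < n"
  shows "A $$ (i,j) = 0" "A $$ (j,i) = 0"
proof -
  have c: "A \<in> carrier_mat n n" and nn: "\<forall>i<n. \<forall>j<n. A $$ (i,j) \<ge> 0" using assms(1) by (auto simp: nonneg_sq_def)
  have "(\<Sum>j<n. A $$ (i,j)) = 0" using assms(3) c by (simp add: dg_def)
  hence "\<forall>j\<in>{..<n}. A $$ (i,j) = 0" using nn assms(2) by (subst (asm) sum_nonneg_eq_0_iff) auto
  thus "A $$ (i,j) = 0" using assms(4) by auto
  thus "A $$ (j,i) = 0" using assms(1,2,4) by (auto simp: nonneg_sq_def symm_def)
qed

lemma sq_sq: "dg A i > 0 \<Longrightarrow> dg A i * (sq A i)^2 = 1"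
  by (simp add: sq_def power_divide)

lemma sq_sqrt: "dg A i > 0 \<Longrightarrow> sq A i * sqrt (dg A i) = 1"
  by (simp add: sq_def)

lemma Lsym_idx:
  assumes c: "A \<in> carrier_mat n n" and i: "i < n" and j: "j < n"
  shows "L_sym A $$ (i,j) = (if i = j then 1 else 0) - sq A i * A $$ (i,j) * sq A j"
proof -
  define Dis where "Dis = deg_inv_sqrt A"
  have Dc: "Dis \<in> carrier_mat n n" using c by (simp add: Dis_def deg_inv_sqrt_def)
  have Di: "Dis $$ (a,b) = (if a = b then sq A a else 0)" if "a < n" "b < n" for a b
    using that c by (simp add: Dis_def deg_inv_sqrt_def sq_def deg_idx)
  have DA: "(Dis * A) $$ (i,k) = sq A i * A $$ (i,k)" if k: "k < n" for k
  proof -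
    have "(Dis * A) $$ (i,k) = (\<Sum>l<n. Dis $$ (i,l) * A $$ (l,k))" by (rule mat_mult_sum[OF Dc c i k])
    also have "\<dots> = (\<Sum>l<n. if l = i then sq A i * A $$ (l,k) else 0)"
      by (rule sum.cong) (auto simp: Di i)
    also have "\<dots> = sq A i * A $$ (i,k)" using i by simp
    finally show ?thesis .
  qed
  have "(Dis * A * Dis) $$ (i,j) = (\<Sum>k<n. (Dis * A) $$ (i,k) * Dis $$ (k,j))"
    by (rule mat_mult_sum[of _ n n _ n]) (use Dc c i j in auto)
  also have "\<dots> = (\<Sum>k<n. if k = j then sq A i * A $$ (i,k) * sq A j else 0)"
    by (rule sum.cong) (auto simp: Di j DA)
  also have "\<dots> = sq A i * A $$ (i,j) * sq A j" using j by simp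
  finally show ?thesis unfolding L_sym_def Dis_def[symmetric] using c i j Dc by simp
qed

lemma Lsym_carrier: "A \<in> carrier_mat n n \<Longrightarrow> L_sym A \<in> carrier_mat n n"
  unfolding L_sym_def deg_inv_sqrt_def by auto

lemma Lsym_symm: assumes "nonneg_sq n A" shows "symm n (L_sym A)"
  using assms unfolding symm_def nonneg_sq_def by (auto simp: Lsym_idx)

lemma mulv_L: assumes c: "A \<in> carrier_mat n n" and r: "r < n"
  shows "mulv n (L_sym A) x r = x r - sq A r * (\<Sum>k<n. A $$ (r,k) * (sq A k * x k))"
proof -
  have "mulv n (L_sym A) x r = (\<Sum>k<n. (if r = k then x k else 0) - sq A r * (A $$ (r,k) * (sq A k * x k)))"
    unfolding mulv_def by (rule sum.cong) (auto simp: Lsym_idx[OF c r] algebra_simps)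
  also have "\<dots> = x r - sq A r * (\<Sum>k<n. A $$ (r,k) * (sq A k * x k))"
    using r by (simp add: sum_subtractf sum_distrib_left)
  finally show ?thesis .
qed

definition isoset :: "nat \<Rightarrow> real mat \<Rightarrow> nat set" where
  "isoset n A = {i. i < n \<and> dg A i = 0}"

lemma quad_parts:
  fixes x :: "nat \<Rightarrow> real"
  assumes N: "nonneg_sq n A"
  defines "y \<equiv> \<lambda>i. sq A i * x i"
  defines "S1 \<equiv> (\<Sum>i<n. \<Sum>j<n. A $$ (i,j) * (y i)^2)"
  defines "S2 \<equiv> (\<Sum>i<n. \<Sum>j<n. A $$ (i,j) * (y i * y j))"
  shows "dotn n x x = (\<Sum>i\<in>isoset n A. (x i)^2) + S1"
    and "dotn n x (mulv n (L_sym A) x) = dotn n x x - S2"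
    and "2 * (S1 - S2) = (\<Sum>i<n. \<Sum>j<n. A $$ (i,j) * (y i - y j)^2)"
    and "2 * (S1 + S2) = (\<Sum>i<n. \<Sum>j<n. A $$ (i,j) * (y i + y j)^2)"
proof -
  have c: "A \<in> carrier_mat n n" and sy: "symm n A" and nn: "\<forall>i<n. \<forall>j<n. A $$ (i,j) \<ge> 0"
    using N by (auto simp: nonneg_sq_def)
  have dgn: "dg A i = (\<Sum>j<n. A $$ (i,j))" for i using c by (simp add: dg_def)
  have S1': "S1 = (\<Sum>i<n. dg A i * (y i)^2)" unfolding S1_def dgn by (simp add: sum_distrib_right)
  have trm: "dg A i * (y i)^2 = (if dg A i = 0 then 0 else (x i)^2)" if "i < n" for i
  proof (cases "dg A i = 0")
    case False
    hence "dg A i > 0" using dg_nonneg[OF N that] by simp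
    thus ?thesis using sq_sq[of A i] False by (simp add: y_def power_mult_distrib)
  qed simp
  have "dotn n x x = (\<Sum>i<n. (x i)^2)" by (simp add: dotn_def power2_eq_square)
  also have "\<dots> = (\<Sum>i<n. (if dg A i = 0 then (x i)^2 else 0)) + (\<Sum>i<n. (if dg A i = 0 then 0 else (x i)^2))"
    by (subst sum.distrib[symmetric]) (rule sum.cong, auto)
  also have "(\<Sum>i<n. (if dg A i = 0 then (x i)^2 else 0)) = (\<Sum>i\<in>isoset n A. (x i)^2)"
    unfolding isoset_def by (subst sum.inter_filter[symmetric]) (auto simp: lessThan_def)
  also have "(\<Sum>i<n. (if dg A i = 0 then 0 else (x i)^2)) = S1"
    unfolding S1' by (rule sum.cong) (auto simp: trm)
  finally show "dotn n x x = (\<Sum>i\<in>isoset n A. (x i)^2) + S1" .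
  have "dotn n x (mulv n (L_sym A) x) = (\<Sum>r<n. x r * (x r - sq A r * (\<Sum>k<n. A $$ (r,k) * (sq A k * x k))))"
    unfolding dotn_def by (rule sum.cong) (auto simp: mulv_L[OF c])
  also have "\<dots> = dotn n x x - S2"
    unfolding S2_def dotn_def y_def by (simp add: algebra_simps sum_subtractf sum_distrib_left)
  finally show "dotn n x (mulv n (L_sym A) x) = dotn n x x - S2" .
  have S1swap: "(\<Sum>i<n. \<Sum>j<n. A $$ (i,j) * (y j)^2) = S1"
  proof -
    have "(\<Sum>i<n. \<Sum>j<n. A $$ (i,j) * (y j)^2) = (\<Sum>j<n. \<Sum>i<n. A $$ (i,j) * (y j)^2)" by (rule sum.swap)
    also have "\<dots> = S1" unfolding S1_def
      by (intro sum.cong refl) (use sy in \<open>auto simp: symm_def\<close>)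
    finally show ?thesis .
  qed
  have "(\<Sum>i<n. \<Sum>j<n. A $$ (i,j) * (y i - y j)^2)
      = (\<Sum>i<n. \<Sum>j<n. A $$ (i,j) * (y i)^2) + (\<Sum>i<n. \<Sum>j<n. A $$ (i,j) * (y j)^2) - 2 * S2"
    unfolding S2_def by (simp add: power2_eq_square algebra_simps sum.distrib sum_subtractf sum_distrib_left)
  thus "2 * (S1 - S2) = (\<Sum>i<n. \<Sum>j<n. A $$ (i,j) * (y i - y j)^2)" using S1swap unfolding S1_def by simp
  have "(\<Sum>i<n. \<Sum>j<n. A $$ (i,j) * (y i + y j)^2)
      = (\<Sum>i<n. \<Sum>j<n. A $$ (i,j) * (y i)^2) + (\<Sum>i<n. \<Sum>j<n. A $$ (i,j) * (y j)^2) + 2 * S2"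
    unfolding S2_def by (simp add: power2_eq_square algebra_simps sum.distrib sum_distrib_left)
  thus "2 * (S1 + S2) = (\<Sum>i<n. \<Sum>j<n. A $$ (i,j) * (y i + y j)^2)" using S1swap unfolding S1_def by simp
qed

lemma lin_aux1: "d = I + S1 \<Longrightarrow> q = d - S2 \<Longrightarrow> 2*(S1+S2) = T \<Longrightarrow> 0 \<le> T \<Longrightarrow> q \<le> 2*d - (I::real)"
  by (simp add: algebra_simps)
lemma lin_aux2: "d = I + S1 \<Longrightarrow> q = d - S2 \<Longrightarrow> 2*(S1-S2) = T \<Longrightarrow> 0 \<le> T \<Longrightarrow> I \<le> (q::real)"
  by (simp add: algebra_simps)
lemma lin_aux3: "d = I + S1 \<Longrightarrow> q = d - S2 \<Longrightarrow> 2*(S1-S2) = T \<Longrightarrow> I + T / 2 = (q::real)"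
  by (simp add: algebra_simps)

lemma quad_lower:
  assumes N: "nonneg_sq n A"
  shows "dotn n x (mulv n (L_sym A) x) \<ge> (\<Sum>i\<in>isoset n A. (x i)^2)"
proof -
  have nn: "\<forall>i<n. \<forall>j<n. A $$ (i,j) \<ge> 0" using N by (auto simp: nonneg_sq_def)
  define y where "y = (\<lambda>i. sq A i * x i)"
  have "(\<Sum>i<n. \<Sum>j<n. A $$ (i,j) * (y i - y j)^2) \<ge> 0" using nn by (auto intro!: sum_nonneg)
  thus ?thesis using lin_aux2[OF quad_parts(1,2,3)[OF N, of x]] unfolding y_def by blast
qed

lemma quad_upper:
  assumes N: "nonneg_sq n A"
  shows "dotn n x (mulv n (L_sym A) x) \<le> 2 * dotn n x x - (\<Sum>i\<in>isoset n A. (x i)^2)"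
proof -
  have nn: "\<forall>i<n. \<forall>j<n. A $$ (i,j) \<ge> 0" using N by (auto simp: nonneg_sq_def)
  define y where "y = (\<lambda>i. sq A i * x i)"
  have "(\<Sum>i<n. \<Sum>j<n. A $$ (i,j) * (y i + y j)^2) \<ge> 0" using nn by (auto intro!: sum_nonneg)
  thus ?thesis using lin_aux1[OF quad_parts(1,2,4)[OF N, of x]] unfolding y_def by blast
qed

lemma quad_zero:
  assumes N: "nonneg_sq n A" and z: "dotn n x (mulv n (L_sym A) x) = 0"
  shows "\<And>i. i \<in> isoset n A \<Longrightarrow> x i = 0"
    and "\<And>i j. i < n \<Longrightarrow> j < n \<Longrightarrow> A $$ (i,j) \<noteq> 0 \<Longrightarrow> sq A i * x i = sq A j * x j"
proof -
  have nn: "\<forall>i<n. \<forall>j<n. A $$ (i,j) \<ge> 0" using N by (auto simp: nonneg_sq_def)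
  define y where "y = (\<lambda>i. sq A i * x i)"
  have fin: "finite (isoset n A)" by (simp add: isoset_def)
  have T1: "(\<Sum>i<n. \<Sum>j<n. A $$ (i,j) * (y i - y j)^2) \<ge> 0" using nn by (auto intro!: sum_nonneg)
  have T2: "(\<Sum>i\<in>isoset n A. (x i)^2) \<ge> 0" by (simp add: sum_nonneg)
  have e: "(\<Sum>i\<in>isoset n A. (x i)^2) + (\<Sum>i<n. \<Sum>j<n. A $$ (i,j) * (y i - y j)^2) / 2 = 0"
    using lin_aux3[OF quad_parts(1,2,3)[OF N, of x]] z unfolding y_def by simp
  hence z1: "(\<Sum>i\<in>isoset n A. (x i)^2) = 0" and z2: "(\<Sum>i<n. \<Sum>j<n. A $$ (i,j) * (y i - y j)^2) = 0"
    using T1 T2 by linarith+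
  show "x i = 0" if "i \<in> isoset n A" for i
    using z1 fin that by (subst (asm) sum_nonneg_eq_0_iff) auto
  show "sq A i * x i = sq A j * x j" if ij: "i < n" "j < n" "A $$ (i,j) \<noteq> 0" for i j
  proof -
    have inner: "\<forall>i\<in>{..<n}. (\<Sum>j<n. A $$ (i,j) * (y i - y j)^2) = 0"
      using z2 nn by (subst (asm) sum_nonneg_eq_0_iff) (auto intro!: sum_nonneg)
    hence "(\<Sum>j<n. A $$ (i,j) * (y i - y j)^2) = 0" using ij by auto
    hence "\<forall>j\<in>{..<n}. A $$ (i,j) * (y i - y j)^2 = 0"
      using nn ij by (subst (asm) sum_nonneg_eq_0_iff) auto
    hence "A $$ (i,j) * (y i - y j)^2 = 0" using ij by auto
    thus ?thesis using ij by (simp add: y_def)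
  qed
qed

lemma quad_zero_intro:
  assumes N: "nonneg_sq n A"
    and iso: "\<And>i. i \<in> isoset n A \<Longrightarrow> x i = 0"
    and edge: "\<And>i j. i < n \<Longrightarrow> j < n \<Longrightarrow> A $$ (i,j) \<noteq> 0 \<Longrightarrow> sq A i * x i = sq A j * x j"
  shows "dotn n x (mulv n (L_sym A) x) = 0"
proof -
  define y where "y = (\<lambda>i. sq A i * x i)"
  have "(\<Sum>i<n. \<Sum>j<n. A $$ (i,j) * (y i - y j)^2) = 0"
    by (intro sum.neutral ballI) (auto simp: y_def dest: edge)
  moreover have "(\<Sum>i\<in>isoset n A. (x i)^2) = 0" by (simp add: iso)
  ultimately show ?thesis using lin_aux3[OF quad_parts(1,2,3)[OF N, of x]] unfolding y_def by simp
qed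

lemma VtMV_idx:
  assumes V: "V \<in> carrier_mat n B" and M: "M \<in> carrier_mat n n" and i: "i < B" and j: "j < B"
  shows "(V\<^sup>T * M * V) $$ (i,j) = (\<Sum>v<n. \<Sum>w<n. V $$ (v,i) * M $$ (v,w) * V $$ (w,j))"
proof -
  have VT: "V\<^sup>T \<in> carrier_mat B n" using V by simp
  have "(V\<^sup>T * M * V) $$ (i,j) = (\<Sum>w<n. (V\<^sup>T * M) $$ (i,w) * V $$ (w,j))"
    by (rule mat_mult_sum[of _ B n _ B]) (use VT M V i j in auto)
  also have "\<dots> = (\<Sum>w<n. (\<Sum>v<n. V\<^sup>T $$ (i,v) * M $$ (v,w)) * V $$ (w,j))"
    by (rule sum.cong[OF refl]) (subst mat_mult_sum[OF VT M i], auto)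
  also have "\<dots> = (\<Sum>w<n. \<Sum>v<n. V $$ (v,i) * M $$ (v,w) * V $$ (w,j))"
    by (rule sum.cong[OF refl]) (use V i in \<open>auto simp: sum_distrib_right intro!: sum.cong\<close>)
  also have "\<dots> = (\<Sum>v<n. \<Sum>w<n. V $$ (v,i) * M $$ (v,w) * V $$ (w,j))" by (rule sum.swap)
  finally show ?thesis .
qed

lemma Lun_idx: assumes c: "A \<in> carrier_mat n n" and v: "v < n" and w: "w < n"
  shows "L_un A $$ (v,w) = (if v = w then dg A v else 0) - A $$ (v,w)"
  using c v w by (simp add: L_un_def diag_of_vec_def deg_dim deg_idx)

lemma Dg_idx: assumes c: "A \<in> carrier_mat n n" and v: "v < n" and w: "w < n"
  shows "diag_of_vec (deg A) $$ (v,w) = (if v = w then dg A v else 0)"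
  using c v w by (simp add: diag_of_vec_def deg_dim deg_idx)

lemma Lun_carrier: "A \<in> carrier_mat n n \<Longrightarrow> L_un A \<in> carrier_mat n n"
  unfolding carrier_mat_def L_un_def by auto

lemma Dg_carrier: "A \<in> carrier_mat n n \<Longrightarrow> diag_of_vec (deg A) \<in> carrier_mat n n"
  by (simp add: diag_of_vec_def deg_dim)

definition wvec :: "real mat \<Rightarrow> real mat \<Rightarrow> nat \<Rightarrow> nat \<Rightarrow> real" where
  "wvec A V j v = sqrt (dg A v) * V $$ (v,j)"

lemma feas_orthon:
  assumes N: "nonneg_sq n A" and V: "V \<in> carrier_mat n B"
  shows "(V\<^sup>T * diag_of_vec (deg A) * V = 1\<^sub>m B) \<longleftrightarrow> orthon n B (wvec A V)"
proof -
  have c: "A \<in> carrier_mat n n" using N by (simp add: nonneg_sq_def)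
  have e: "(V\<^sup>T * diag_of_vec (deg A) * V) $$ (i,j) = dotn n (wvec A V i) (wvec A V j)" if "i < B" "j < B" for i j
  proof -
    have "(V\<^sup>T * diag_of_vec (deg A) * V) $$ (i,j) = (\<Sum>v<n. \<Sum>w<n. V $$ (v,i) * (if v = w then dg A v else 0) * V $$ (w,j))"
      by (subst VtMV_idx[OF V Dg_carrier[OF c] that]) (rule sum.cong[OF refl], rule sum.cong[OF refl], simp add: Dg_idx[OF c])
    also have "\<dots> = (\<Sum>v<n. V $$ (v,i) * dg A v * V $$ (v,j))"
    proof (rule sum.cong[OF refl])
      fix v assume "v \<in> {..<n}"
      hence v: "v < n" by simp
      have "(\<Sum>w<n. V $$ (v,i) * (if v = w then dg A v else 0) * V $$ (w,j))
          = (\<Sum>w<n. if v = w then V $$ (v,i) * dg A v * V $$ (w,j) else 0)" by (rule sum.cong) auto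
      also have "\<dots> = V $$ (v,i) * dg A v * V $$ (v,j)" using v by (subst sum.delta') auto
      finally show "(\<Sum>w<n. V $$ (v,i) * (if v = w then dg A v else 0) * V $$ (w,j)) = V $$ (v,i) * dg A v * V $$ (v,j)" .
    qed
    also have "\<dots> = dotn n (wvec A V i) (wvec A V j)"
      unfolding dotn_def wvec_def
      by (rule sum.cong[OF refl]) (use dg_nonneg[OF N] in \<open>auto simp: mult_ac\<close>)
    finally show ?thesis .
  qed
  have dims: "V\<^sup>T * diag_of_vec (deg A) * V \<in> carrier_mat B B" using V c Dg_carrier[OF c] by (metis mult_carrier_mat transpose_carrier_mat)
  show ?thesis
  proof
    assume "V\<^sup>T * diag_of_vec (deg A) * V = 1\<^sub>m B"
    thus "orthon n B (wvec A V)" unfolding orthon_def using e by (metis index_one_mat(1))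
  next
    assume o: "orthon n B (wvec A V)"
    show "V\<^sup>T * diag_of_vec (deg A) * V = 1\<^sub>m B"
      by (rule eq_matI) (use dims e o in \<open>auto simp: orthon_def\<close>)
  qed
qed

lemma trace_id:
  assumes N: "nonneg_sq n A" and V: "V \<in> carrier_mat n B"
  shows "mtrace (V\<^sup>T * L_un A * V) = (\<Sum>j<B. dotn n (wvec A V j) (mulv n (L_sym A) (wvec A V j)))"
proof -
  have c: "A \<in> carrier_mat n n" using N by (simp add: nonneg_sq_def)
  have nn: "\<And>i j. i < n \<Longrightarrow> j < n \<Longrightarrow> A $$ (i,j) \<ge> 0" using N by (simp add: nonneg_sq_def)
  have dim: "dim_row (V\<^sup>T * L_un A * V) = B" using V by simp
  have diag: "(V\<^sup>T * L_un A * V) $$ (j,j) = dotn n (wvec A V j) (mulv n (L_sym A) (wvec A V j))" if j: "j < B" for j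
  proof -
    define w where "w = wvec A V j"
    have "(V\<^sup>T * L_un A * V) $$ (j,j) = (\<Sum>v<n. \<Sum>u<n. V $$ (v,j) * ((if v = u then dg A v else 0) - A $$ (v,u)) * V $$ (u,j))"
      by (subst VtMV_idx[OF V Lun_carrier[OF c] j j]) (rule sum.cong[OF refl], rule sum.cong[OF refl], simp add: Lun_idx[OF c])
    also have "\<dots> = (\<Sum>v<n. dg A v * (V $$ (v,j))^2) - (\<Sum>v<n. \<Sum>u<n. A $$ (v,u) * (V $$ (v,j) * V $$ (u,j)))"
    proof -
      have "(\<Sum>v<n. \<Sum>u<n. V $$ (v,j) * ((if v = u then dg A v else 0) - A $$ (v,u)) * V $$ (u,j))
          = (\<Sum>v<n. (\<Sum>u<n. if v = u then dg A v * (V $$ (v,j))^2 else 0) - (\<Sum>u<n. A $$ (v,u) * (V $$ (v,j) * V $$ (u,j))))"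
        by (rule sum.cong[OF refl], subst sum_subtractf[symmetric], rule sum.cong[OF refl])
           (auto simp: algebra_simps power2_eq_square)
      also have "\<dots> = (\<Sum>v<n. dg A v * (V $$ (v,j))^2 - (\<Sum>u<n. A $$ (v,u) * (V $$ (v,j) * V $$ (u,j))))"
        by (rule sum.cong[OF refl]) simp
      finally show ?thesis by (simp add: sum_subtractf)
    qed
    also have "(\<Sum>v<n. dg A v * (V $$ (v,j))^2) = dotn n w w"
      unfolding dotn_def w_def wvec_def
      by (rule sum.cong[OF refl]) (use dg_nonneg[OF N] in \<open>auto simp: power2_eq_square mult_ac\<close>)
    also have "(\<Sum>v<n. \<Sum>u<n. A $$ (v,u) * (V $$ (v,j) * V $$ (u,j))) =
        (\<Sum>v<n. \<Sum>u<n. A $$ (v,u) * (sq A v * w v * (sq A u * w u)))"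
    proof (intro sum.cong refl)
      fix v u assume "v \<in> {..<n}" "u \<in> {..<n}"
      hence v: "v < n" and u: "u < n" by auto
      show "A $$ (v,u) * (V $$ (v,j) * V $$ (u,j)) = A $$ (v,u) * (sq A v * w v * (sq A u * w u))"
      proof (cases "A $$ (v,u) = 0")
        case False
        have dv: "dg A v > 0"
        proof -
          have "dg A v \<noteq> 0" using dg_zero(1)[OF N v _ u] False by auto
          thus ?thesis using dg_nonneg[OF N v] by simp
        qed
        have du: "dg A u > 0"
        proof -
          have "dg A u \<noteq> 0" using dg_zero(2)[OF N u _ v] False by auto
          thus ?thesis using dg_nonneg[OF N u] by simp
        qed
        have "sq A v * w v = V $$ (v,j)" using sq_sqrt[OF dv] unfolding w_def wvec_def by (metis mult.assoc mult_1)
        moreover have "sq A u * w u = V $$ (u,j)" using sq_sqrt[OF du] unfolding w_def wvec_def by (metis mult.assoc mult_1)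
        ultimately show ?thesis by simp
      qed simp
    qed
    also have "dotn n w w - \<dots> = dotn n w (mulv n (L_sym A) w)"
      using quad_parts(2)[OF N, of w] by simp
    finally show ?thesis unfolding w_def .
  qed
  show ?thesis unfolding mtrace_def dim by (rule sum.cong) (auto simp: diag)
qed

lemma sum_lessThan_add: "(\<Sum>j<R+C. f j) = (\<Sum>j<R. f j) + (\<Sum>c<C. f (R + c))" for f :: "nat \<Rightarrow> real"
  by (induction C) (auto simp: add.assoc)

lemma Abp_carrier: "X \<in> carrier_mat R C \<Longrightarrow> A_bp X \<in> carrier_mat (R+C) (R+C)"
  by (simp add: A_bp_def)

lemma Abp_idx: assumes "X \<in> carrier_mat R C" "i < R+C" "j < R+C"
  shows "A_bp X $$ (i,j) = (if i < R \<and> R \<le> j then X $$ (i, j-R) else if R \<le> i \<and> j < R then X $$ (j, i-R) else 0)"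
  using assms by (simp add: A_bp_def)

lemma Abp_nonneg_sq: assumes X: "X \<in> carrier_mat R C" and nn: "nonneg_mat X"
  shows "nonneg_sq (R+C) (A_bp X)"
  unfolding nonneg_sq_def symm_def
proof (intro conjI allI impI)
  show "A_bp X \<in> carrier_mat (R+C) (R+C)" using X by (rule Abp_carrier)
next
  fix i j assume "i < R+C" "j < R+C"
  thus "A_bp X $$ (i,j) = A_bp X $$ (j,i)" using X by (simp add: Abp_idx)
next
  fix i j assume ij: "i < R+C" "j < R+C"
  thus "A_bp X $$ (i,j) \<ge> 0" using X nn by (auto simp: Abp_idx nonneg_mat_def)
qed

lemma Abp_bip: assumes "X \<in> carrier_mat R C" "i < R+C" "j < R+C" "A_bp X $$ (i,j) \<noteq> 0"
  shows "(i < R \<and> R \<le> j \<and> X $$ (i, j-R) \<noteq> 0) \<or> (R \<le> i \<and> j < R \<and> X $$ (j, i-R) \<noteq> 0)"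
  using assms by (auto simp: Abp_idx split: if_splits)

lemma dg_row: assumes X: "X \<in> carrier_mat R C" and i: "i < R"
  shows "dg (A_bp X) i = (\<Sum>c<C. X $$ (i,c))"
proof -
  have "dg (A_bp X) i = (\<Sum>j<R+C. A_bp X $$ (i,j))" using X by (simp add: dg_def A_bp_def)
  also have "\<dots> = (\<Sum>j<R. A_bp X $$ (i,j)) + (\<Sum>c<C. A_bp X $$ (i,R+c))" by (rule sum_lessThan_add)
  also have "(\<Sum>j<R. A_bp X $$ (i,j)) = 0" using X i by (auto simp: Abp_idx intro!: sum.neutral)
  also have "(\<Sum>c<C. A_bp X $$ (i,R+c)) = (\<Sum>c<C. X $$ (i,c))" using X i by (auto simp: Abp_idx intro!: sum.cong)
  finally show ?thesis by simp
qed

lemma dg_col: assumes X: "X \<in> carrier_mat R C" and j: "j < C"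
  shows "dg (A_bp X) (R+j) = (\<Sum>r<R. X $$ (r,j))"
proof -
  have "dg (A_bp X) (R+j) = (\<Sum>v<R+C. A_bp X $$ (R+j,v))" using X by (simp add: dg_def A_bp_def)
  also have "\<dots> = (\<Sum>v<R. A_bp X $$ (R+j,v)) + (\<Sum>c<C. A_bp X $$ (R+j,R+c))" by (rule sum_lessThan_add)
  also have "(\<Sum>c<C. A_bp X $$ (R+j,R+c)) = 0" using X j by (auto simp: Abp_idx intro!: sum.neutral)
  also have "(\<Sum>v<R. A_bp X $$ (R+j,v)) = (\<Sum>r<R. X $$ (r,j))" using X j by (auto simp: Abp_idx intro!: sum.cong)
  finally show ?thesis by simp
qed

lemma eig_sum: "(\<Sum>j=1..B. eig_small j M) = (\<Sum>i<B. sorted_eigenvalues M ! i)"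
  by (induction B) (auto simp: eig_small_def)

lemma Lsym_decomp:
  assumes N: "nonneg_sq n A"
  shows "\<exists>q lam. eigbasis n (L_sym A) q lam \<and> (\<forall>i j. i \<le> j \<longrightarrow> j < n \<longrightarrow> lam i \<le> lam j) \<and>
     (\<forall>i<n. sorted_eigenvalues (L_sym A) ! i = lam i)"
proof -
  have c: "L_sym A \<in> carrier_mat n n" using N by (simp add: nonneg_sq_def Lsym_carrier)
  have s: "\<And>i j. i < n \<Longrightarrow> j < n \<Longrightarrow> L_sym A $$ (i,j) = L_sym A $$ (j,i)"
    using Lsym_symm[OF N] by (simp add: symm_def)
  have ex: "\<exists>q lam. (\<forall>i<n. \<forall>j<n. (\<Sum>k<n. q i k * q j k) = (if i = j then 1 else 0)) \<and>
       (\<forall>i<n. \<forall>r<n. (\<Sum>k<n. L_sym A $$ (r,k) * q i k) = lam i * q i r) \<and>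
       (\<forall>r<n. \<forall>s<n. (\<Sum>i<n. q i r * q i s) = (if r = s then 1 else 0)) \<and>
       (\<forall>i j. i \<le> j \<longrightarrow> j < n \<longrightarrow> lam i \<le> lam j) \<and>
       length (sorted_eigenvalues (L_sym A)) = n \<and> (\<forall>i<n. sorted_eigenvalues (L_sym A) ! i = lam i)"
    by (rule eig_decomp[OF c]) (use s in auto)
  from ex obtain q lam where
    PP: "(\<forall>i<n. \<forall>j<n. (\<Sum>k<n. q i k * q j k) = (if i = j then 1 else 0)) \<and>
       (\<forall>i<n. \<forall>r<n. (\<Sum>k<n. L_sym A $$ (r,k) * q i k) = lam i * q i r) \<and>
       (\<forall>r<n. \<forall>s<n. (\<Sum>i<n. q i r * q i s) = (if r = s then 1 else 0)) \<and>
       (\<forall>i j. i \<le> j \<longrightarrow> j < n \<longrightarrow> lam i \<le> lam j) \<and>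
       length (sorted_eigenvalues (L_sym A)) = n \<and> (\<forall>i<n. sorted_eigenvalues (L_sym A) ! i = lam i)"
    by (elim exE) (rule that)
  note P = PP[THEN conjunct1] PP[THEN conjunct2, THEN conjunct1] PP[THEN conjunct2, THEN conjunct2, THEN conjunct1]
    PP[THEN conjunct2, THEN conjunct2, THEN conjunct2, THEN conjunct1]
    PP[THEN conjunct2, THEN conjunct2, THEN conjunct2, THEN conjunct2, THEN conjunct2]
  have o: "orthon n n q" unfolding orthon_def dotn_def using P(1) by blast
  have m: "\<forall>i<n. \<forall>r<n. mulv n (L_sym A) (q i) r = lam i * q i r" unfolding mulv_def using P(2) by blast
  have "eigbasis n (L_sym A) q lam"
    unfolding eigbasis_def using o m P(3) by blast
  thus ?thesis using P(4,5) by blast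
qed

lemma eig_nonneg:
  assumes N: "nonneg_sq n A" and E: "eigbasis n (L_sym A) q lam" and i: "i < n"
  shows "lam i \<ge> 0"
proof -
  have "dotn n (q i) (mulv n (L_sym A) (q i)) = (\<Sum>r<n. q i r * (lam i * q i r))"
    unfolding dotn_def by (rule sum.cong) (use E i in \<open>auto simp: eigbasis_def\<close>)
  also have "\<dots> = lam i * dotn n (q i) (q i)" by (simp add: dotn_def sum_distrib_left mult_ac)
  also have "\<dots> = lam i" using E i by (simp add: eigbasis_def orthon_def)
  finally have eq: "dotn n (q i) (mulv n (L_sym A) (q i)) = lam i" .
  have "(\<Sum>k\<in>isoset n A. (q i k)^2) \<ge> 0" by (simp add: sum_nonneg)
  thus ?thesis using quad_lower[OF N, of "q i"] eq by linarith
qed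

lemma lower_bound:
  assumes N: "nonneg_sq n A" and V: "V \<in> carrier_mat n B" and F: "V\<^sup>T * diag_of_vec (deg A) * V = 1\<^sub>m B"
    and B: "1 \<le> B" "B \<le> n"
  shows "(\<Sum>i<B. sorted_eigenvalues (L_sym A) ! i) \<le> mtrace (V\<^sup>T * L_un A * V)"
proof -
  obtain q lam where E: "eigbasis n (L_sym A) q lam" and so: "\<forall>i j. i \<le> j \<longrightarrow> j < n \<longrightarrow> lam i \<le> lam j"
    and se: "\<forall>i<n. sorted_eigenvalues (L_sym A) ! i = lam i" using Lsym_decomp[OF N] by blast
  have O: "orthon n B (wvec A V)" using feas_orthon[OF N V] F by simp
  have "(\<Sum>i<B. sorted_eigenvalues (L_sym A) ! i) = (\<Sum>i<B. lam i)" using se B by auto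
  also have "\<dots> \<le> (\<Sum>j<B. dotn n (wvec A V j) (mulv n (L_sym A) (wvec A V j)))"
    by (rule ky_fan[OF E Lsym_symm[OF N] _ O B]) (use so in auto)
  also have "\<dots> = mtrace (V\<^sup>T * L_un A * V)" using trace_id[OF N V] by simp
  finally show ?thesis .
qed

definition labeling :: "real mat \<Rightarrow> nat \<Rightarrow> nat \<Rightarrow> nat \<Rightarrow> (nat \<Rightarrow> nat) \<Rightarrow> (nat \<Rightarrow> nat) \<Rightarrow> bool" where
  "labeling X R C k lr lc \<longleftrightarrow> (\<forall>i<R. lr i < k) \<and> (\<forall>j<C. lc j < k) \<and>
     (\<forall>i<R. \<forall>j<C. X $$ (i,j) \<noteq> 0 \<longrightarrow> lr i = lc j) \<and>
     (\<forall>l<k. \<exists>i<R. \<exists>j<C. lr i = l \<and> lc j = l \<and> X $$ (i,j) \<noteq> 0)"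

lemma labeling_zero_sum:
  assumes X: "X \<in> carrier_mat R C" and nn: "nonneg_mat X" and L: "labeling X R C k lr lc"
    and B: "1 \<le> B" "B \<le> k" "B \<le> R + C"
  shows "(\<Sum>i<B. sorted_eigenvalues (L_sym (A_bp X)) ! i) = 0"
proof -
  define n where "n = R + C"
  define A where "A = A_bp X"
  have N: "nonneg_sq n A" unfolding A_def n_def by (rule Abp_nonneg_sq[OF X nn])
  define lab where "lab v = (if v < R then lr v else lc (v - R))" for v
  define vol where "vol l = (\<Sum>v\<in>{v. v < n \<and> lab v = l}. dg A v)" for l
  define e where "e l v = (if lab v = l then sqrt (dg A v) / sqrt (vol l) else 0)" for l v
  have volpos: "vol l > 0" if l: "l < k" for l
  proof -
    obtain i j where ij: "i < R" "j < C" "lr i = l" "lc j = l" "X $$ (i,j) \<noteq> 0" using L l unfolding labeling_def by blast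
    have "X $$ (i,j) > 0" using nn ij X unfolding nonneg_mat_def by (metis carrier_matD less_eq_real_def)
    moreover have "X $$ (i,j) \<le> dg A i" unfolding A_def dg_row[OF X ij(1)]
      by (rule member_le_sum) (use nn ij X in \<open>auto simp: nonneg_mat_def\<close>)
    ultimately have "dg A i > 0" by simp
    moreover have "dg A i \<le> vol l" unfolding vol_def
      by (rule member_le_sum) (use ij dg_nonneg[OF N] in \<open>auto simp: lab_def n_def\<close>)
    ultimately show ?thesis by simp
  qed
  have O: "orthon n B e"
    unfolding orthon_def
  proof (intro allI impI)
    fix l m assume l: "l < B" and m: "m < B"
    show "dotn n (e l) (e m) = (if l = m then 1 else 0)"
    proof (cases "l = m")
      case True
      have "dotn n (e l) (e l) = (\<Sum>v<n. if lab v = l then dg A v / vol l else 0)"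
        unfolding dotn_def e_def
        by (rule sum.cong) (use dg_nonneg[OF N] volpos[of l] l B in \<open>auto simp: real_sqrt_mult[symmetric]\<close>)
      also have "\<dots> = (\<Sum>v\<in>{v. v < n \<and> lab v = l}. dg A v / vol l)"
        by (subst sum.inter_filter[symmetric]) (auto simp: lessThan_def)
      also have "\<dots> = 1" using volpos[of l] l B by (simp add: sum_divide_distrib[symmetric] vol_def)
      finally show ?thesis using True by simp
    next
      case False
      thus ?thesis unfolding dotn_def e_def by (auto intro!: sum.neutral)
    qed
  qed
  have Q: "dotn n (e l) (mulv n (L_sym A) (e l)) = 0" if l: "l < B" for l
  proof (rule quad_zero_intro[OF N])
    fix v assume "v \<in> isoset n A"
    thus "e l v = 0" by (simp add: isoset_def e_def)
  next
    fix v w assume vw: "v < n" "w < n" "A $$ (v,w) \<noteq> 0"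
    have dv: "dg A v > 0"
    proof -
      have "dg A v \<noteq> 0" using dg_zero(1)[OF N vw(1) _ vw(2)] vw(3) by auto
      thus ?thesis using dg_nonneg[OF N vw(1)] by simp
    qed
    have dw: "dg A w > 0"
    proof -
      have "dg A w \<noteq> 0" using dg_zero(2)[OF N vw(2) _ vw(1)] vw(3) by auto
      thus ?thesis using dg_nonneg[OF N vw(2)] by simp
    qed
    have L3: "\<forall>i<R. \<forall>j<C. X $$ (i,j) \<noteq> 0 \<longrightarrow> lr i = lc j" using L unfolding labeling_def by blast
    have labeq: "lab v = lab w"
      using Abp_bip[OF X vw[unfolded n_def A_def]]
    proof
      assume h: "v < R \<and> R \<le> w \<and> X $$ (v, w - R) \<noteq> 0"
      have "w - R < C" using vw(2) h unfolding n_def by arith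
      hence "lr v = lc (w - R)" using L3 h by blast
      thus ?thesis using h by (simp add: lab_def)
    next
      assume h: "R \<le> v \<and> w < R \<and> X $$ (w, v - R) \<noteq> 0"
      have "v - R < C" using vw(1) h unfolding n_def by arith
      hence "lr w = lc (v - R)" using L3 h by blast
      thus ?thesis using h by (simp add: lab_def)
    qed
    have "sq A v * e l v = (if lab v = l then 1 / sqrt (vol l) else 0)"
      using sq_sqrt[OF dv] by (simp add: e_def)
    moreover have "sq A w * e l w = (if lab w = l then 1 / sqrt (vol l) else 0)"
      using sq_sqrt[OF dw] by (simp add: e_def)
    ultimately show "sq A v * e l v = sq A w * e l w" using labeq by simp
  qed
  obtain q lam where E: "eigbasis n (L_sym A) q lam" and so: "\<forall>i j. i \<le> j \<longrightarrow> j < n \<longrightarrow> lam i \<le> lam j"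
    and se: "\<forall>i<n. sorted_eigenvalues (L_sym A) ! i = lam i" using Lsym_decomp[OF N] by blast
  have "(\<Sum>i<B. lam i) \<le> (\<Sum>j<B. dotn n (e j) (mulv n (L_sym A) (e j)))"
    by (rule ky_fan[OF E Lsym_symm[OF N] _ O]) (use so B n_def in auto)
  also have "\<dots> = 0" using Q by simp
  finally have le: "(\<Sum>i<B. lam i) \<le> 0" .
  have ge: "(\<Sum>i<B. lam i) \<ge> 0" by (rule sum_nonneg) (use eig_nonneg[OF N E] B n_def in auto)
  have "(\<Sum>i<B. sorted_eigenvalues (L_sym (A_bp X)) ! i) = (\<Sum>i<B. lam i)"
    using se B unfolding A_def n_def by auto
  thus ?thesis using le ge by simp
qed

lemma mono_a: assumes inc: "\<forall>l<k. a l < a (Suc l)" and ll: "l \<le> l'" and lk: "l' \<le> k"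
  shows "a l \<le> (a l' :: nat)"
  using ll lk
proof (induction l')
  case (Suc m)
  show ?case
  proof (cases "l = Suc m")
    case False
    hence "a l \<le> a m" using Suc by auto
    also have "a m < a (Suc m)" using inc Suc by auto
    finally show ?thesis by simp
  qed simp
qed simp

lemma interval_index:
  fixes a :: "nat \<Rightarrow> nat"
  assumes a0: "a 0 = 0" and inc: "\<forall>l<k. a l < a (Suc l)" and p: "p < a k"
  shows "\<exists>!l. l < k \<and> a l \<le> p \<and> p < a (Suc l)"
proof -
  have k0: "k \<noteq> 0" using a0 p by (cases k) auto
  define l where "l = (LEAST l. p < a (Suc l))"
  have ex: "p < a (Suc (k - 1))" using k0 p by simp
  have l1: "p < a (Suc l)" unfolding l_def by (rule LeastI[of "\<lambda>l. p < a (Suc l)" "k - 1", OF ex])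
  have l2: "l \<le> k - 1" unfolding l_def by (rule Least_le[of "\<lambda>l. p < a (Suc l)" "k - 1", OF ex])
  have l3: "a l \<le> p"
  proof (cases l)
    case 0 thus ?thesis using a0 by simp
  next
    case (Suc m)
    have "m < l" using Suc by simp
    hence "\<not> p < a (Suc m)" unfolding l_def by (rule not_less_Least)
    thus ?thesis using Suc by simp
  qed
  have uniq: "l' = l" if "l' < k" "a l' \<le> p" "p < a (Suc l')" for l'
  proof (rule ccontr)
    assume "l' \<noteq> l"
    hence "l' < l \<or> l < l'" by auto
    thus False
    proof
      assume "l' < l"
      hence "a (Suc l') \<le> a l" using mono_a[OF inc, of "Suc l'" l] l2 k0 by simp
      thus False using that l3 by simp
    next
      assume "l < l'"
      hence "a (Suc l) \<le> a l'" using mono_a[OF inc, of "Suc l" l'] that by simp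
      thus False using that l1 by simp
    qed
  qed
  show ?thesis using l1 l2 l3 k0 uniq by (intro ex1I[of _ l]) auto
qed

lemma block_to_labeling:
  assumes X: "X \<in> carrier_mat R C" and bd: "block_diag_perm B X"
  shows "\<exists>k lr lc. B \<le> k \<and> labeling X R C k lr lc"
proof -
  from bd X obtain \<sigma> \<tau> k a b where
    sig: "\<sigma> permutes {..<R}" and tau: "\<tau> permutes {..<C}" and Bk: "B \<le> k" and
    a0: "a 0 = 0" and ak: "a k = R" and b0: "b 0 = 0" and bk: "b k = C" and
    inc: "\<forall>l<k. a l < a (Suc l) \<and> b l < b (Suc l)" and
    blk: "\<forall>i<R. \<forall>j<C. X $$ (\<sigma> i, \<tau> j) \<noteq> 0 \<longrightarrow> (\<exists>l<k. a l \<le> i \<and> i < a (Suc l) \<and> b l \<le> j \<and> j < b (Suc l))" and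
    wit: "\<forall>l<k. \<exists>i j. a l \<le> i \<and> i < a (Suc l) \<and> b l \<le> j \<and> j < b (Suc l) \<and> X $$ (\<sigma> i, \<tau> j) \<noteq> 0"
    unfolding block_diag_perm_def by auto
  have inca: "\<forall>l<k. a l < a (Suc l)" and incb: "\<forall>l<k. b l < b (Suc l)" using inc by auto
  define lr where "lr i = (THE l. l < k \<and> a l \<le> inv_into UNIV \<sigma> i \<and> inv_into UNIV \<sigma> i < a (Suc l))" for i
  define lc where "lc j = (THE l. l < k \<and> b l \<le> inv_into UNIV \<tau> j \<and> inv_into UNIV \<tau> j < b (Suc l))" for j
  have isig: "inv_into UNIV \<sigma> i < R" if "i < R" for i using permutes_inv[OF sig] that permutes_in_image[OF permutes_inv[OF sig], of i] by simp
  have itau: "inv_into UNIV \<tau> j < C" if "j < C" for j using permutes_inv[OF tau] that permutes_in_image[OF permutes_inv[OF tau], of j] by simp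
  have lr: "lr i < k \<and> a (lr i) \<le> inv_into UNIV \<sigma> i \<and> inv_into UNIV \<sigma> i < a (Suc (lr i))" if "i < R" for i
    unfolding lr_def by (rule theI'[OF interval_index[OF a0 inca]]) (use isig[OF that] ak in simp)
  have lc: "lc j < k \<and> b (lc j) \<le> inv_into UNIV \<tau> j \<and> inv_into UNIV \<tau> j < b (Suc (lc j))" if "j < C" for j
    unfolding lc_def by (rule theI'[OF interval_index[OF b0 incb]]) (use itau[OF that] bk in simp)
  have lr_eq: "lr i = l" if "i < R" "l < k" "a l \<le> inv_into UNIV \<sigma> i" "inv_into UNIV \<sigma> i < a (Suc l)" for i l
    using interval_index[OF a0 inca, of "inv_into UNIV \<sigma> i"] isig[OF that(1)] ak lr[OF that(1)] that by auto
  have lc_eq: "lc j = l" if "j < C" "l < k" "b l \<le> inv_into UNIV \<tau> j" "inv_into UNIV \<tau> j < b (Suc l)" for j l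
    using interval_index[OF b0 incb, of "inv_into UNIV \<tau> j"] itau[OF that(1)] bk lc[OF that(1)] that by auto
  have L: "labeling X R C k lr lc"
    unfolding labeling_def
  proof (intro conjI allI impI)
    fix i assume "i < R" thus "lr i < k" using lr by blast
  next
    fix j assume "j < C" thus "lc j < k" using lc by blast
  next
    fix i j assume i: "i < R" and j: "j < C" and x: "X $$ (i,j) \<noteq> 0"
    have "X $$ (\<sigma> (inv_into UNIV \<sigma> i), \<tau> (inv_into UNIV \<tau> j)) \<noteq> 0"
      using x permutes_inverses(1)[OF sig] permutes_inverses(1)[OF tau] by simp
    then obtain l where l: "l < k" "a l \<le> inv_into UNIV \<sigma> i" "inv_into UNIV \<sigma> i < a (Suc l)" "b l \<le> inv_into UNIV \<tau> j" "inv_into UNIV \<tau> j < b (Suc l)"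
      using blk isig[OF i] itau[OF j] by blast
    show "lr i = lc j" using lr_eq[OF i l(1-3)] lc_eq[OF j l(1) l(4,5)] by simp
  next
    fix l assume l: "l < k"
    then obtain i' j' where w: "a l \<le> i'" "i' < a (Suc l)" "b l \<le> j'" "j' < b (Suc l)" "X $$ (\<sigma> i', \<tau> j') \<noteq> 0"
      using wit by blast
    have i'R: "i' < R" using w(2) mono_a[OF inca, of "Suc l" k] l ak by simp
    have j'C: "j' < C" using w(4) mono_a[OF incb, of "Suc l" k] l bk by simp
    have si: "\<sigma> i' < R" using permutes_in_image[OF sig, of i'] i'R by simp
    have tj: "\<tau> j' < C" using permutes_in_image[OF tau, of j'] j'C by simp
    have "lr (\<sigma> i') = l" using lr_eq[OF si l] w permutes_inverses(2)[OF sig] by simp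
    moreover have "lc (\<tau> j') = l" using lc_eq[OF tj l] w permutes_inverses(2)[OF tau] by simp
    ultimately show "\<exists>i<R. \<exists>j<C. lr i = l \<and> lc j = l \<and> X $$ (i,j) \<noteq> 0" using si tj w(5) by blast
  qed
  show ?thesis using L Bk by blast
qed

lemma sorted_filter_less:
  fixes ks :: "nat list"
  assumes "sorted ks" "p < length ks"
  shows "ks ! p < l \<longleftrightarrow> p < length (filter (\<lambda>x. x < l) ks)"
  using assms
proof (induction ks arbitrary: p)
  case (Cons x xs)
  have sx: "sorted xs" and le: "\<forall>y\<in>set xs. x \<le> y" using Cons.prems(1) by auto
  show ?case
  proof (cases "x < l")
    case True
    show ?thesis
    proof (cases p)
      case 0 thus ?thesis using True by simp
    next
      case (Suc p')
      thus ?thesis using Cons.IH[OF sx, of p'] Cons.prems True by simp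
    qed
  next
    case False
    have "filter (\<lambda>y. y < l) xs = []" using le False by (auto simp: filter_empty_conv)
    moreover have "\<not> (x # xs) ! p < l"
    proof (cases p)
      case (Suc p')
      hence "xs ! p' \<in> set xs" using Cons.prems by simp
      thus ?thesis using le False Suc by fastforce
    qed (use False in simp)
    ultimately show ?thesis using False by simp
  qed
qed simp

lemma sort_perm:
  fixes lr :: "nat \<Rightarrow> nat" and R :: nat
  defines "rs \<equiv> sort_key lr [0..<R]"
  defines "\<sigma> \<equiv> (\<lambda>i. if i < R then rs ! i else i)"
  defines "a \<equiv> (\<lambda>l. length (filter (\<lambda>x. x < l) (map lr rs)))"
  shows "\<sigma> permutes {..<R}" "\<And>p. p < R \<Longrightarrow> \<sigma> p = rs ! p" "length rs = R" "set rs = {..<R}"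
    "\<And>p l. p < R \<Longrightarrow> lr (rs ! p) < l \<longleftrightarrow> p < a l"
proof -
  show len: "length rs = R" by (simp add: rs_def)
  show set: "set rs = {..<R}" by (auto simp: rs_def)
  have dist: "distinct rs" by (simp add: rs_def)
  have "bij_betw ((!) rs) {..<R} {..<R}" by (rule bij_betw_nth[OF dist]) (use len set in auto)
  hence "bij_betw \<sigma> {..<R} {..<R}" by (rule bij_betw_cong[THEN iffD1, rotated]) (simp add: \<sigma>_def)
  thus "\<sigma> permutes {..<R}" by (rule bij_imp_permutes) (simp add: \<sigma>_def)
  show "\<And>p. p < R \<Longrightarrow> \<sigma> p = rs ! p" by (simp add: \<sigma>_def)
  show "\<And>p l. p < R \<Longrightarrow> lr (rs ! p) < l \<longleftrightarrow> p < a l"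
  proof -
    fix p l assume p: "p < R"
    have "sorted (map lr rs)" by (simp add: rs_def sorted_sort_key)
    from sorted_filter_less[OF this, of p l] show "lr (rs ! p) < l \<longleftrightarrow> p < a l" using p len by (simp add: a_def)
  qed
qed

lemma labeling_to_block:
  assumes X: "X \<in> carrier_mat R C" and L: "labeling X R C k lr lc" and Bk: "B \<le> k"
  shows "block_diag_perm B X"
proof -
  define rs where "rs = sort_key lr [0..<R]"
  define cs where "cs = sort_key lc [0..<C]"
  define \<sigma> where "\<sigma> i = (if i < R then rs ! i else i)" for i
  define \<tau> where "\<tau> i = (if i < C then cs ! i else i)" for i
  define a where "a l = length (filter (\<lambda>x. x < l) (map lr rs))" for l
  define b where "b l = length (filter (\<lambda>x. x < l) (map lc cs))" for l
  note SR = sort_perm[where lr = lr and R = R, folded rs_def, folded \<sigma>_def a_def]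
  note SC = sort_perm[where lr = lc and R = C, folded cs_def, folded \<tau>_def b_def]
  have L1: "\<forall>i<R. lr i < k" and L2: "\<forall>j<C. lc j < k" and L3: "\<forall>i<R. \<forall>j<C. X $$ (i,j) \<noteq> 0 \<longrightarrow> lr i = lc j"
    and L4: "\<forall>l<k. \<exists>i<R. \<exists>j<C. lr i = l \<and> lc j = l \<and> X $$ (i,j) \<noteq> 0" using L unfolding labeling_def by auto
  have rsR: "rs ! p < R" if "p < R" for p using SR(3,4) that nth_mem by (metis lessThan_iff)
  have csC: "cs ! p < C" if "p < C" for p using SC(3,4) that nth_mem by (metis lessThan_iff)
  have a0: "a 0 = 0" by (simp add: a_def)
  have b0: "b 0 = 0" by (simp add: b_def)
  have ak: "a k = R"
  proof -
    have "filter (\<lambda>x. x < k) (map lr rs) = map lr rs" using L1 SR(4) by (auto simp: filter_id_conv)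
    thus ?thesis using SR(3) unfolding a_def by (metis length_map)
  qed
  have bk: "b k = C"
  proof -
    have "filter (\<lambda>x. x < k) (map lc cs) = map lc cs" using L2 SC(4) by (auto simp: filter_id_conv)
    thus ?thesis using SC(3) unfolding b_def by (metis length_map)
  qed
  have posr: "\<exists>p<R. rs ! p = i" if "i < R" for i using SR(3,4) that by (metis in_set_conv_nth lessThan_iff)
  have posc: "\<exists>p<C. cs ! p = j" if "j < C" for j using SC(3,4) that by (metis in_set_conv_nth lessThan_iff)
  have inr: "a l \<le> p \<and> p < a (Suc l)" if "p < R" "lr (rs ! p) = l" for p l
    using SR(5)[OF that(1), of l] SR(5)[OF that(1), of "Suc l"] that(2) by auto
  have inc: "b l \<le> p \<and> p < b (Suc l)" if "p < C" "lc (cs ! p) = l" for p l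
    using SC(5)[OF that(1), of l] SC(5)[OF that(1), of "Suc l"] that(2) by auto
  have W: "\<exists>p q. a l \<le> p \<and> p < a (Suc l) \<and> b l \<le> q \<and> q < b (Suc l) \<and> X $$ (\<sigma> p, \<tau> q) \<noteq> 0" if l: "l < k" for l
  proof -
    obtain i j where ij: "i < R" "j < C" "lr i = l" "lc j = l" "X $$ (i,j) \<noteq> 0" using L4 l by blast
    obtain p where p: "p < R" "rs ! p = i" using posr[OF ij(1)] by blast
    obtain q where q: "q < C" "cs ! q = j" using posc[OF ij(2)] by blast
    show ?thesis using inr[OF p(1), of l] inc[OF q(1), of l] p q ij SR(2)[OF p(1)] SC(2)[OF q(1)]
      by (intro exI[of _ p] exI[of _ q]) auto
  qed
  have incr: "\<forall>l<k. a l < a (Suc l) \<and> b l < b (Suc l)"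
  proof (intro allI impI)
    fix l assume "l < k"
    then obtain p q where "a l \<le> p" "p < a (Suc l)" "b l \<le> q" "q < b (Suc l)" using W by blast
    thus "a l < a (Suc l) \<and> b l < b (Suc l)" by simp
  qed
  have blk: "\<forall>i<R. \<forall>j<C. X $$ (\<sigma> i, \<tau> j) \<noteq> 0 \<longrightarrow> (\<exists>l<k. a l \<le> i \<and> i < a (Suc l) \<and> b l \<le> j \<and> j < b (Suc l))"
  proof (intro allI impI)
    fix i j assume i: "i < R" and j: "j < C" and x: "X $$ (\<sigma> i, \<tau> j) \<noteq> 0"
    have e: "lr (rs ! i) = lc (cs ! j)" using L3 rsR[OF i] csC[OF j] x SR(2)[OF i] SC(2)[OF j] by auto
    have lk: "lr (rs ! i) < k" using L1 rsR[OF i] by auto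
    show "\<exists>l<k. a l \<le> i \<and> i < a (Suc l) \<and> b l \<le> j \<and> j < b (Suc l)"
      using inr[OF i refl] inc[OF j refl] e lk by (intro exI[of _ "lr (rs ! i)"]) auto
  qed
  show ?thesis unfolding block_diag_perm_def
    using SR(1) SC(1) Bk a0 ak b0 bk incr blk W X
    by (intro exI[of _ \<sigma>] exI[of _ \<tau>] exI[of _ k] exI[of _ a] exI[of _ b]) auto
qed

lemma kernel_classes:
  assumes N: "nonneg_sq n A" and O: "orthon n B q"
    and Z: "\<And>j. j < B \<Longrightarrow> dotn n (q j) (mulv n (L_sym A) (q j)) = 0"
  defines "V' \<equiv> {v. v < n \<and> dg A v \<noteq> 0}"
  defines "cls \<equiv> (\<lambda>v. {w. w \<in> V' \<and> (\<forall>t<B. sq A w * q t w = sq A v * q t v)})"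
  shows "B \<le> card (cls ` V')"
    and "\<And>v w. v < n \<Longrightarrow> w < n \<Longrightarrow> A $$ (v,w) \<noteq> 0 \<Longrightarrow> v \<in> V' \<and> w \<in> V' \<and> cls v = cls w"
proof -
  define y where "y t v = sq A v * q t v" for t v
  have iso0: "q t v = 0" if "t < B" "v < n" "dg A v = 0" for t v
    using quad_zero(1)[OF N Z[OF that(1)], of v] that by (simp add: isoset_def)
  have edge: "y t v = y t w" if "t < B" "v < n" "w < n" "A $$ (v,w) \<noteq> 0" for t v w
    using quad_zero(2)[OF N Z[OF that(1)] that(2-4)] by (simp add: y_def)
  have dpos: "dg A v > 0" if "v \<in> V'" for v using that dg_nonneg[OF N] by (force simp: V'_def)
  have qy: "q t v = sqrt (dg A v) * y t v" if "v \<in> V'" for t v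
    using sq_sqrt[OF dpos[OF that]] by (simp add: y_def mult.assoc[symmetric] mult.commute)
  have cls_alt: "cls v = {w. w \<in> V' \<and> (\<forall>t<B. y t w = y t v)}" for v by (simp add: cls_def y_def)
  have self: "v \<in> cls v" if "v \<in> V'" for v using that by (simp add: cls_alt)
  have sub: "cls v \<subseteq> V'" for v by (auto simp: cls_alt)
  have same: "cls w = cls v" if "w \<in> cls v" for v w using that by (auto simp: cls_alt)
  define K where "K = cls ` V'"
  have finK: "finite K" unfolding K_def V'_def by simp
  have finc: "finite c" if "c \<in> K" for c using sub[of _] that unfolding K_def V'_def
    by (auto intro: finite_subset[of _ "{..<n}"])
  have disj: "c \<inter> d = {}" if "c \<in> K" "d \<in> K" "c \<noteq> d" for c d
    using that same unfolding K_def by blast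
  define vol where "vol c = (\<Sum>v\<in>c. dg A v)" for c
  have volpos: "vol c > 0" if c: "c \<in> K" for c
  proof -
    obtain v where v: "v \<in> V'" "c = cls v" using c unfolding K_def by blast
    have "dg A v \<le> vol c" unfolding vol_def
      by (rule member_le_sum) (use v self finc[OF c] sub dpos in \<open>force intro: less_imp_le\<close>)+
    thus ?thesis using dpos[OF v(1)] by simp
  qed
  define e where "e c v = (if v \<in> c then sqrt (dg A v) / sqrt (vol c) else 0)" for c v
  have csub: "c \<subseteq> {..<n}" if "c \<in> K" for c using sub that unfolding K_def V'_def by auto
  have e1: "dotn n (e c) (e c) = 1" if c: "c \<in> K" for c
  proof -
    have "dotn n (e c) (e c) = (\<Sum>v<n. if v \<in> c then dg A v / vol c else 0)"
      unfolding dotn_def e_def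
      by (rule sum.cong) (use dg_nonneg[OF N] volpos[OF c] in \<open>auto simp: real_sqrt_mult[symmetric]\<close>)
    also have "\<dots> = (\<Sum>v\<in>c. dg A v / vol c)"
      using csub[OF c] by (subst sum.inter_filter[symmetric]) (auto intro: sum.cong)
    also have "\<dots> = 1" using volpos[OF c] by (simp add: sum_divide_distrib[symmetric] vol_def)
    finally show ?thesis .
  qed
  have e2: "dotn n (e c) (e d) = 0" if "c \<in> K" "d \<in> K" "c \<noteq> d" for c d
    unfolding dotn_def e_def using disj[OF that] by (auto intro!: sum.neutral)
  have span: "dotn n (q j) (q j) = (\<Sum>c\<in>K. (dotn n (q j) (e c))^2)" if j: "j < B" for j
  proof -
    have dc: "(dotn n (q j) (e c))^2 = (\<Sum>v\<in>c. (q j v)^2)" if c: "c \<in> K" for c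
    proof -
      obtain v0 where v0: "v0 \<in> V'" "c = cls v0" using c unfolding K_def by blast
      define Y where "Y = y j v0"
      have yc: "y j v = Y" if "v \<in> c" for v using that v0 j by (simp add: cls_alt Y_def)
      have "dotn n (q j) (e c) = (\<Sum>v<n. if v \<in> c then q j v * sqrt (dg A v) / sqrt (vol c) else 0)"
        unfolding dotn_def e_def by (rule sum.cong) auto
      also have "\<dots> = (\<Sum>v\<in>c. q j v * sqrt (dg A v) / sqrt (vol c))"
        using csub[OF c] by (subst sum.inter_filter[symmetric]) (auto intro: sum.cong)
      also have "\<dots> = (\<Sum>v\<in>c. Y * dg A v / sqrt (vol c))"
      proof (rule sum.cong[OF refl])
        fix v assume v: "v \<in> c"
        hence vV: "v \<in> V'" using sub v0 by auto
        have "q j v * sqrt (dg A v) = Y * (sqrt (dg A v) * sqrt (dg A v))"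
          using qy[OF vV, of j] yc[OF v] by (simp add: mult_ac)
        also have "\<dots> = Y * dg A v" using dg_nonneg[OF N] vV by (simp add: V'_def)
        finally show "q j v * sqrt (dg A v) / sqrt (vol c) = Y * dg A v / sqrt (vol c)" by simp
      qed
      also have "\<dots> = Y * vol c / sqrt (vol c)" by (simp add: vol_def sum_distrib_left[symmetric] sum_divide_distrib[symmetric])
      finally have "(dotn n (q j) (e c))^2 = (Y * vol c / sqrt (vol c))^2" by simp
      also have "\<dots> = Y^2 * vol c" using volpos[OF c] by (simp add: power_divide power_mult_distrib power2_eq_square)
      also have "\<dots> = (\<Sum>v\<in>c. (q j v)^2)"
      proof -
        have "(\<Sum>v\<in>c. (q j v)^2) = (\<Sum>v\<in>c. Y^2 * dg A v)"
        proof (rule sum.cong[OF refl])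
          fix v assume v: "v \<in> c"
          hence vV: "v \<in> V'" using sub v0 by auto
          show "(q j v)^2 = Y^2 * dg A v"
            using qy[OF vV, of j] yc[OF v] dg_nonneg[OF N] vV by (simp add: V'_def power_mult_distrib)
        qed
        thus ?thesis by (simp add: vol_def sum_distrib_left)
      qed
      finally show ?thesis .
    qed
    have "(\<Sum>c\<in>K. (dotn n (q j) (e c))^2) = (\<Sum>c\<in>K. \<Sum>v\<in>c. (q j v)^2)" by (rule sum.cong) (auto simp: dc)
    also have "\<dots> = (\<Sum>v\<in>\<Union>K. (q j v)^2)"
      by (subst sum.Union_disjoint) (use finc disj in auto)
    also have "\<Union>K = V'" unfolding K_def using self sub by blast
    also have "(\<Sum>v\<in>V'. (q j v)^2) = (\<Sum>v<n. (q j v)^2)"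
      by (rule sum.mono_neutral_left) (use iso0[OF j] in \<open>auto simp: V'_def\<close>)
    also have "\<dots> = dotn n (q j) (q j)" by (simp add: dotn_def power2_eq_square)
    finally show ?thesis by simp
  qed
  show "B \<le> card (cls ` V')" unfolding K_def[symmetric]
    by (rule bessel_count[OF O finK e1 e2 span]) auto
  show "v \<in> V' \<and> w \<in> V' \<and> cls v = cls w" if vw: "v < n" "w < n" "A $$ (v,w) \<noteq> 0" for v w
  proof -
    have v: "v \<in> V'" using dg_zero(1)[OF N vw(1) _ vw(2)] vw by (auto simp: V'_def)
    have w: "w \<in> V'" using dg_zero(2)[OF N vw(2) _ vw(1)] vw by (auto simp: V'_def)
    have "w \<in> cls v" using w edge[OF _ vw] by (simp add: cls_alt)
    thus ?thesis using v w same by blast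
  qed
qed

lemma basis_quad:
  assumes E: "eigbasis n M q lam" and i: "i < n"
  shows "dotn n (q i) (mulv n M (q i)) = lam i"
proof -
  have "dotn n (q i) (mulv n M (q i)) = (\<Sum>r<n. q i r * (lam i * q i r))"
    unfolding dotn_def by (rule sum.cong) (use E i in \<open>auto simp: eigbasis_def\<close>)
  also have "\<dots> = lam i * dotn n (q i) (q i)" by (simp add: dotn_def sum_distrib_left mult_ac)
  also have "\<dots> = lam i" using E i by (simp add: eigbasis_def orthon_def)
  finally show ?thesis .
qed

lemma zero_sum_labeling:
  assumes X: "X \<in> carrier_mat R C" and nn: "nonneg_mat X" and B: "1 \<le> B" "B \<le> R + C"
    and S: "(\<Sum>i<B. sorted_eigenvalues (L_sym (A_bp X)) ! i) = 0"
  shows "\<exists>k lr lc. B \<le> k \<and> labeling X R C k lr lc"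
proof -
  define n where "n = R + C"
  define A where "A = A_bp X"
  have N: "nonneg_sq n A" unfolding A_def n_def by (rule Abp_nonneg_sq[OF X nn])
  obtain q lam where E: "eigbasis n (L_sym A) q lam" and so: "\<forall>i j. i \<le> j \<longrightarrow> j < n \<longrightarrow> lam i \<le> lam j"
    and se: "\<forall>i<n. sorted_eigenvalues (L_sym A) ! i = lam i" using Lsym_decomp[OF N] by blast
  have "(\<Sum>i<B. lam i) = 0" using S se B unfolding A_def n_def by (metis (no_types, lifting) lessThan_iff order_less_le_trans sum.cong)
  hence lam0: "lam i = 0" if "i < B" for i
    using that eig_nonneg[OF N E] B unfolding n_def by (subst (asm) sum_nonneg_eq_0_iff) auto
  have Z: "dotn n (q j) (mulv n (L_sym A) (q j)) = 0" if "j < B" for j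
    using basis_quad[OF E, of j] lam0[OF that] that B by (simp add: n_def)
  have O: "orthon n B q" using E B unfolding eigbasis_def orthon_def n_def by auto
  define V' where "V' = {v. v < n \<and> dg A v \<noteq> 0}"
  define cls where "cls v = {w. w \<in> V' \<and> (\<forall>t<B. sq A w * q t w = sq A v * q t v)}" for v
  have cls_eq: "(\<lambda>v. {w. w \<in> V' \<and> (\<forall>t<B. sq A w * q t w = sq A v * q t v)}) = cls" by (rule ext) (simp add: cls_def)
  note KC = kernel_classes[OF N O Z, folded V'_def, unfolded cls_eq]
  define K where "K = cls ` V'"
  define k where "k = card K"
  have Bk: "B \<le> k" using KC(1) by (simp add: k_def K_def)
  obtain h where h: "bij_betw h {0..<k} K" using ex_bij_betw_nat_finite[of K] unfolding k_def K_def V'_def by auto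
  define lab where "lab v = the_inv_into {0..<k} h (cls v)" for v
  have labk: "lab v < k" if "v \<in> V'" for v
  proof -
    have "cls v \<in> K" using that by (simp add: K_def)
    thus ?thesis using h unfolding lab_def by (metis atLeastLessThan_iff bij_betw_def the_inv_into_into order_refl)
  qed
  have hlab: "h (lab v) = cls v" if "v \<in> V'" for v
  proof -
    have "cls v \<in> K" using that by (simp add: K_def)
    thus ?thesis using h unfolding lab_def bij_betw_def by (metis f_the_inv_into_f)
  qed
  have labeq: "lab v = l" if "v \<in> V'" "l < k" "h l = cls v" for v l
  proof -
    have "h (lab v) = h l" using hlab[OF that(1)] that(3) by simp
    moreover have "inj_on h {0..<k}" using h by (simp add: bij_betw_def)
    ultimately show ?thesis using labk[OF that(1)] that(2) by (auto dest: inj_onD)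
  qed
  define lr where "lr i = (if i \<in> V' then lab i else 0)" for i
  define lc where "lc j = (if R + j \<in> V' then lab (R + j) else 0)" for j
  have k0: "0 < k" using Bk B by simp
  have L: "labeling X R C k lr lc"
    unfolding labeling_def
  proof (intro conjI allI impI)
    fix i assume "i < R" thus "lr i < k" using labk k0 by (simp add: lr_def)
  next
    fix j assume "j < C" thus "lc j < k" using labk k0 by (simp add: lc_def)
  next
    fix i j assume i: "i < R" and j: "j < C" and x: "X $$ (i,j) \<noteq> 0"
    have "A $$ (i, R + j) \<noteq> 0" using X i j x by (simp add: A_def Abp_idx)
    hence "i \<in> V' \<and> R + j \<in> V' \<and> cls i = cls (R + j)" using KC(2)[of i "R + j"] i j by (simp add: n_def cls_def)
    thus "lr i = lc j" by (simp add: lr_def lc_def lab_def)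
  next
    fix l assume l: "l < k"
    have "h l \<in> K" using h l by (auto simp: bij_betw_def)
    then obtain v where v: "v \<in> V'" "h l = cls v" by (auto simp: K_def)
    have vn: "v < n" and dv: "dg A v \<noteq> 0" using v by (auto simp: V'_def)
    obtain w where w: "w < n" "A $$ (v,w) \<noteq> 0"
    proof (rule ccontr)
      assume "\<not> thesis"
      hence "\<forall>w<n. A $$ (v,w) = 0" using that by blast
      moreover have "dim_col A = n" using N by (auto simp: nonneg_sq_def)
      ultimately have "dg A v = 0" by (simp add: dg_def)
      thus False using dv by simp
    qed
    have vw: "v \<in> V' \<and> w \<in> V' \<and> cls v = cls w" using KC(2)[OF _ vn w] by (simp add: cls_def)
    have lv: "lab v = l" using labeq[OF v(1) l v(2)] .
    have lw: "lab w = l" using labeq[of w l] vw l v(2) by simp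
    from Abp_bip[OF X vn[unfolded n_def] w(1)[unfolded n_def] w(2)[unfolded A_def]]
    show "\<exists>i<R. \<exists>j<C. lr i = l \<and> lc j = l \<and> X $$ (i,j) \<noteq> 0"
    proof
      assume c: "v < R \<and> R \<le> w \<and> X $$ (v, w - R) \<noteq> 0"
      have "w - R < C" using c w(1) unfolding n_def by arith
      moreover have "lr v = l" using lv v by (simp add: lr_def)
      moreover have "lc (w - R) = l" using lw vw c by (simp add: lc_def)
      ultimately show ?thesis using c by blast
    next
      assume c: "R \<le> v \<and> w < R \<and> X $$ (w, v - R) \<noteq> 0"
      have "v - R < C" using c vn unfolding n_def by arith
      moreover have "lr w = l" using lw vw by (simp add: lr_def)
      moreover have "lc (v - R) = l" using lv v c by (simp add: lc_def)
      ultimately show ?thesis using c by blast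
    qed
  qed
  show ?thesis using L Bk by blast
qed

lemma sym_decomp:
  assumes c: "M \<in> carrier_mat n n" and S: "symm n M"
  shows "\<exists>q lam. eigbasis n M q lam \<and> (\<forall>i j. i \<le> j \<longrightarrow> j < n \<longrightarrow> lam i \<le> lam j) \<and>
     (\<forall>i<n. sorted_eigenvalues M ! i = lam i)"
proof -
  have s: "\<And>i j. i < n \<Longrightarrow> j < n \<Longrightarrow> M $$ (i,j) = M $$ (j,i)" using S by (simp add: symm_def)
  have ex: "\<exists>q lam. (\<forall>i<n. \<forall>j<n. (\<Sum>k<n. q i k * q j k) = (if i = j then 1 else 0)) \<and>
       (\<forall>i<n. \<forall>r<n. (\<Sum>k<n. M $$ (r,k) * q i k) = lam i * q i r) \<and>
       (\<forall>r<n. \<forall>s<n. (\<Sum>i<n. q i r * q i s) = (if r = s then 1 else 0)) \<and>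
       (\<forall>i j. i \<le> j \<longrightarrow> j < n \<longrightarrow> lam i \<le> lam j) \<and>
       length (sorted_eigenvalues M) = n \<and> (\<forall>i<n. sorted_eigenvalues M ! i = lam i)"
    by (rule eig_decomp[OF c]) (use s in auto)
  from ex obtain q lam where
    PP: "(\<forall>i<n. \<forall>j<n. (\<Sum>k<n. q i k * q j k) = (if i = j then 1 else 0)) \<and>
       (\<forall>i<n. \<forall>r<n. (\<Sum>k<n. M $$ (r,k) * q i k) = lam i * q i r) \<and>
       (\<forall>r<n. \<forall>s<n. (\<Sum>i<n. q i r * q i s) = (if r = s then 1 else 0)) \<and>
       (\<forall>i j. i \<le> j \<longrightarrow> j < n \<longrightarrow> lam i \<le> lam j) \<and>
       length (sorted_eigenvalues M) = n \<and> (\<forall>i<n. sorted_eigenvalues M ! i = lam i)"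
    by (elim exE) (rule that)
  note P = PP[THEN conjunct1] PP[THEN conjunct2, THEN conjunct1] PP[THEN conjunct2, THEN conjunct2, THEN conjunct1]
    PP[THEN conjunct2, THEN conjunct2, THEN conjunct2, THEN conjunct1]
    PP[THEN conjunct2, THEN conjunct2, THEN conjunct2, THEN conjunct2, THEN conjunct2]
  have o: "orthon n n q" unfolding orthon_def dotn_def using P(1) by blast
  have m: "\<forall>i<n. \<forall>r<n. mulv n M (q i) r = lam i * q i r" unfolding mulv_def using P(2) by blast
  have "eigbasis n M q lam" unfolding eigbasis_def using o m P(3) by blast
  thus ?thesis using P(4,5) by blast
qed

lemma dotn_cong: "(\<And>v. v < n \<Longrightarrow> x v = x' v) \<Longrightarrow> (\<And>v. v < n \<Longrightarrow> y v = y' v) \<Longrightarrow> dotn n x y = dotn n x' y'"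
  unfolding dotn_def by (rule sum.cong) auto

lemma mulv_cong: "(\<And>v. v < n \<Longrightarrow> x v = x' v) \<Longrightarrow> mulv n M x r = mulv n M x' r"
  unfolding mulv_def by (rule sum.cong) auto

lemma bessel_count_set:
  fixes e :: "'a \<Rightarrow> nat \<Rightarrow> real" and p :: "'b \<Rightarrow> nat \<Rightarrow> real"
  assumes J: "finite J" and Op: "\<And>a b. a \<in> J \<Longrightarrow> b \<in> J \<Longrightarrow> dotn n (p a) (p b) = (if a = b then 1 else 0)"
    and I: "finite I"
    and Oe: "\<And>c. c \<in> I \<Longrightarrow> dotn n (e c) (e c) = 1"
    and Oe2: "\<And>c d. c \<in> I \<Longrightarrow> d \<in> I \<Longrightarrow> c \<noteq> d \<Longrightarrow> dotn n (e c) (e d) = 0"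
    and span: "\<And>j. j \<in> J \<Longrightarrow> dotn n (p j) (p j) = (\<Sum>c\<in>I. (dotn n (p j) (e c))^2)"
  shows "card J \<le> card I"
proof -
  obtain g where g: "bij_betw g {0..<card J} J" using ex_bij_betw_nat_finite[OF J] by blast
  have gJ: "g i \<in> J" if "i < card J" for i using g that by (auto simp: bij_betw_def)
  have ginj: "g i = g j \<longleftrightarrow> i = j" if "i < card J" "j < card J" for i j
    using g that unfolding bij_betw_def inj_on_def by auto
  have O: "orthon n (card J) (\<lambda>i. p (g i))"
    unfolding orthon_def using Op gJ ginj by auto
  show ?thesis by (rule bessel_count[OF O I Oe Oe2]) (use span gJ in auto)
qed

definition L2of :: "real mat \<Rightarrow> nat \<Rightarrow> real mat" where
  "L2of A n = mat n n (\<lambda>(i,j). L_sym A $$ (i,j) + (if i = j \<and> dg A i = 0 then 2 else 0))"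

definition dlt :: "nat \<Rightarrow> nat \<Rightarrow> real" where
  "dlt i = (\<lambda>v. if v = i then 1 else 0)"

definition flip :: "nat \<Rightarrow> (nat \<Rightarrow> real) \<Rightarrow> nat \<Rightarrow> real" where
  "flip R x = (\<lambda>v. (if v < R then 1 else -1) * x v)"

lemma L2_carrier: "L2of A n \<in> carrier_mat n n" by (simp add: L2of_def)

lemma L2_symm: assumes N: "nonneg_sq n A" shows "symm n (L2of A n)"
  using Lsym_symm[OF N] by (auto simp: symm_def L2of_def)

lemma F1: assumes N: "nonneg_sq n A" and r: "r < n"
  shows "mulv n (L2of A n) x r = mulv n (L_sym A) x r + (if dg A r = 0 then 2 * x r else 0)"
proof -
  have "mulv n (L2of A n) x r = (\<Sum>k<n. L_sym A $$ (r,k) * x k + (if k = r then (if dg A r = 0 then 2 * x r else 0) else 0))"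
    unfolding mulv_def by (rule sum.cong) (use r in \<open>auto simp: L2of_def algebra_simps\<close>)
  also have "\<dots> = mulv n (L_sym A) x r + (if dg A r = 0 then 2 * x r else 0)"
    using r by (simp add: sum.distrib mulv_def)
  finally show ?thesis .
qed

lemma F1': assumes N: "nonneg_sq n A" and r: "r < n" and z: "\<And>v. v < n \<Longrightarrow> dg A v = 0 \<Longrightarrow> x v = 0"
  shows "mulv n (L2of A n) x r = mulv n (L_sym A) x r"
  using F1[OF N r] z[OF r] by simp

lemma F2: assumes N: "nonneg_sq n A"
  shows "dotn n x (mulv n (L2of A n) x) = dotn n x (mulv n (L_sym A) x) + 2 * (\<Sum>i\<in>isoset n A. (x i)^2)"
proof -
  have "dotn n x (mulv n (L2of A n) x) = (\<Sum>r<n. x r * mulv n (L_sym A) x r + (if dg A r = 0 then 2 * (x r)^2 else 0))"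
    unfolding dotn_def by (rule sum.cong) (auto simp: F1[OF N] algebra_simps power2_eq_square)
  also have "\<dots> = dotn n x (mulv n (L_sym A) x) + (\<Sum>r<n. if dg A r = 0 then 2 * (x r)^2 else 0)"
    by (simp add: sum.distrib dotn_def)
  also have "(\<Sum>r<n. if dg A r = 0 then 2 * (x r)^2 else 0) = 2 * (\<Sum>i\<in>isoset n A. (x i)^2)"
    unfolding isoset_def sum_distrib_left by (subst sum.inter_filter[symmetric]) (auto simp: lessThan_def)
  finally show ?thesis .
qed

lemma F3: assumes N: "nonneg_sq n A" and i: "i \<in> isoset n A" and r: "r < n"
  shows "mulv n (L_sym A) (dlt i) r = dlt i r" "mulv n (L2of A n) (dlt i) r = 3 * dlt i r"
proof -
  have c: "A \<in> carrier_mat n n" using N by (simp add: nonneg_sq_def)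
  have iin: "i < n" and di: "dg A i = 0" using i by (auto simp: isoset_def)
  have "mulv n (L_sym A) (dlt i) r = (\<Sum>k<n. if k = i then L_sym A $$ (r,k) else 0)"
    unfolding mulv_def dlt_def by (rule sum.cong) auto
  also have "\<dots> = L_sym A $$ (r,i)" using iin by simp
  also have "\<dots> = dlt i r" using Lsym_idx[OF c r iin] di by (simp add: sq_def dlt_def)
  finally show 1: "mulv n (L_sym A) (dlt i) r = dlt i r" .
  show "mulv n (L2of A n) (dlt i) r = 3 * dlt i r" using F1[OF N r, of "dlt i"] 1 di
    by (auto simp: dlt_def)
qed

lemma flip_dot: "dotn n (flip R x) (flip R y) = dotn n x y"
  unfolding dotn_def flip_def by (rule sum.cong) auto

lemma flip_eig:
  assumes X: "X \<in> carrier_mat R C" and nn: "nonneg_mat X" and r: "r < R + C"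
    and ev: "\<And>v. v < R + C \<Longrightarrow> mulv (R+C) (L_sym (A_bp X)) x v = \<mu> * x v"
  shows "mulv (R+C) (L_sym (A_bp X)) (flip R x) r = (2 - \<mu>) * flip R x r"
proof -
  define n where "n = R + C"
  define A where "A = A_bp X"
  have c: "A \<in> carrier_mat n n" using Abp_carrier[OF X] by (simp add: A_def n_def)
  define s where "s v = (if v < R then 1 else -1 :: real)" for v
  have key: "A $$ (r,k) * (sq A k * (s k * x k)) = - s r * (A $$ (r,k) * (sq A k * x k))" if k: "k < n" for k
  proof (cases "A $$ (r,k) = 0")
    case False
    from Abp_bip[OF X r k[unfolded n_def] False[unfolded A_def]]
    have "s k = - s r" by (auto simp: s_def)
    thus ?thesis by simp
  qed simp
  define T where "T = (\<Sum>k<n. A $$ (r,k) * (sq A k * x k))"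
  have m1: "mulv n (L_sym A) (flip R x) r = s r * x r - sq A r * (\<Sum>k<n. A $$ (r,k) * (sq A k * (s k * x k)))"
    using mulv_L[OF c r[folded n_def], of "flip R x"] by (simp add: flip_def s_def)
  have m2: "(\<Sum>k<n. A $$ (r,k) * (sq A k * (s k * x k))) = - s r * T"
    unfolding T_def by (simp add: key sum_distrib_left)
  have m3: "sq A r * T = x r - \<mu> * x r"
    using mulv_L[OF c r[folded n_def], of x] ev[OF r] by (simp add: n_def A_def T_def)
  have "mulv n (L_sym A) (flip R x) r = s r * x r + s r * (sq A r * T)" unfolding m1 m2 by (simp add: algebra_simps)
  also have "\<dots> = (2 - \<mu>) * (s r * x r)" unfolding m3 by (simp add: algebra_simps)
  finally show ?thesis by (simp add: n_def A_def flip_def s_def)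
qed

lemma dotn_dlt: "i < n \<Longrightarrow> dotn n (dlt i) x = x i"
proof -
  assume i: "i < n"
  have "dotn n (dlt i) x = (\<Sum>k<n. if k = i then x k else 0)" unfolding dotn_def dlt_def by (rule sum.cong) auto
  thus ?thesis using i by simp
qed

lemma part2_construct:
  assumes X: "X \<in> carrier_mat R C" and nn: "nonneg_mat X" and B: "1 \<le> B"
    and cnt: "2 * B \<le> card {v. v < R + C \<and> dg (A_bp X) v \<noteq> 0}"
  shows "\<exists>U. U \<in> carrier_mat (R+C) B \<and> U\<^sup>T * diag_of_vec (deg (A_bp X)) * U = 1\<^sub>m B \<and>
         mtrace (U\<^sup>T * L_un (A_bp X) * U) = (\<Sum>i<B. sorted_eigenvalues (L_sym (A_bp X)) ! i)"
proof -
  define n where "n = R + C"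
  define A where "A = A_bp X"
  have N: "nonneg_sq n A" unfolding A_def n_def by (rule Abp_nonneg_sq[OF X nn])
  define L where "L = L_sym A"
  define M where "M = L2of A n"
  define V' where "V' = {v. v < n \<and> dg A v \<noteq> 0}"
  define iso where "iso = isoset n A"
  have cnt': "2 * B \<le> card V'" using cnt by (simp add: V'_def n_def A_def)
  have finV: "finite V'" by (simp add: V'_def)
  have Vn: "card V' \<le> n" using card_mono[of "{..<n}" V'] by (auto simp: V'_def)
  have Bn: "B \<le> n" using cnt' Vn by simp
  have SL: "symm n L" unfolding L_def by (rule Lsym_symm[OF N])
  have SM: "symm n M" unfolding M_def by (rule L2_symm[OF N])
  obtain p lam where EL: "eigbasis n L p lam" and soL: "\<forall>i j. i \<le> j \<longrightarrow> j < n \<longrightarrow> lam i \<le> lam j"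
    and seL: "\<forall>i<n. sorted_eigenvalues L ! i = lam i" using Lsym_decomp[OF N] unfolding L_def by blast
  obtain q nu where EM: "eigbasis n M q nu" and soM: "\<forall>i j. i \<le> j \<longrightarrow> j < n \<longrightarrow> nu i \<le> nu j"
    using sym_decomp[OF L2_carrier SM[unfolded M_def]] unfolding M_def by blast
  have qorth: "dotn n (q a) (q b) = (if a = b then 1 else 0)" if "a < n" "b < n" for a b
    using EM that by (simp add: eigbasis_def orthon_def)
  have qeig: "mulv n M (q k) r = nu k * q k r" if "k < n" "r < n" for k r
    using EM that by (simp add: eigbasis_def)
  have peig: "mulv n L (p k) r = lam k * p k r" if "k < n" "r < n" for k r
    using EL that by (simp add: eigbasis_def)
  have isoI: "i \<in> iso \<longleftrightarrow> i < n \<and> dg A i = 0" for i by (simp add: iso_def isoset_def)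
  have z3: "q k i = 0" if k: "k < n" and nk: "nu k \<noteq> 3" and i: "i \<in> iso" for k i
  proof -
    have "dotn n (dlt i) (q k) = 0"
      by (rule eigvec_coeff_zero[OF EM SM k, of "dlt i" 3]) (use F3(2)[OF N i[unfolded iso_def]] nk in \<open>auto simp: M_def\<close>)
    thus ?thesis using dotn_dlt[of i n "q k"] i isoI by simp
  qed
  have z1: "p k i = 0" if k: "k < n" and nk: "lam k \<noteq> 1" and i: "i \<in> iso" for k i
  proof -
    have "dotn n (dlt i) (p k) = 0"
      by (rule eigvec_coeff_zero[OF EL SL k, of "dlt i" 1]) (use F3(1)[OF N i[unfolded iso_def]] nk in \<open>auto simp: L_def\<close>)
    thus ?thesis using dotn_dlt[of i n "p k"] i isoI by simp
  qed
  define G1 where "G1 = {k. k < n \<and> nu k < 1}"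
  define G2 where "G2 = {k. k < n \<and> nu k = 1}"
  define G3 where "G3 = {k. k < n \<and> 1 < nu k \<and> nu k \<noteq> 3}"
  define G4 where "G4 = {k. k < n \<and> nu k = 3}"
  have C1: "card G3 \<le> card G1"
  proof (rule bessel_count_set[of G3 n "\<lambda>k. flip R (q k)" G1 q])
    show "finite G3" by (simp add: G3_def)
    show "finite G1" by (simp add: G1_def)
    show "dotn n (flip R (q a)) (flip R (q b)) = (if a = b then 1 else 0)" if "a \<in> G3" "b \<in> G3" for a b
      using that qorth by (simp add: flip_dot G3_def)
    show "dotn n (q c) (q c) = 1" if "c \<in> G1" for c using that qorth by (simp add: G1_def)
    show "dotn n (q c) (q d) = 0" if "c \<in> G1" "d \<in> G1" "c \<noteq> d" for c d using that qorth by (simp add: G1_def)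
    fix k assume k: "k \<in> G3"
    hence kn: "k < n" and k1: "1 < nu k" and k3: "nu k \<noteq> 3" by (auto simp: G3_def)
    have zq: "q k v = 0" if "v < n" "dg A v = 0" for v using z3[OF kn k3] that isoI by simp
    have evL: "mulv (R+C) (L_sym (A_bp X)) (q k) v = nu k * q k v" if "v < R + C" for v
      using F1'[OF N that[folded n_def] zq] qeig[OF kn that[folded n_def]] by (simp add: M_def L_def A_def n_def)
    have fz: "flip R (q k) v = 0" if "v < n" "dg A v = 0" for v using zq[OF that] by (simp add: flip_def)
    have evM: "mulv n M (flip R (q k)) r = (2 - nu k) * flip R (q k) r" if r: "r < n" for r
      using F1'[OF N r fz] flip_eig[OF X nn r[unfolded n_def] evL] by (simp add: M_def L_def A_def n_def)
    have "dotn n (flip R (q k)) (flip R (q k)) = (\<Sum>i\<in>{i. i < n \<and> nu i < 1}. (dotn n (flip R (q k)) (q i))^2)"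
      by (rule eigvec_norm_restrict[OF EM SM evM]) (use k1 in auto)
    thus "dotn n (flip R (q k)) (flip R (q k)) = (\<Sum>c\<in>G1. (dotn n (flip R (q k)) (q c))^2)" by (simp add: G1_def)
  qed
  have C2: "card G4 \<le> card iso"
  proof (rule bessel_count_set[of G4 n q iso dlt])
    show "finite G4" by (simp add: G4_def)
    show "finite iso" by (simp add: iso_def isoset_def)
    show "dotn n (q a) (q b) = (if a = b then 1 else 0)" if "a \<in> G4" "b \<in> G4" for a b
      using that qorth by (simp add: G4_def)
    show "dotn n (dlt c) (dlt c) = 1" if "c \<in> iso" for c using that isoI dotn_dlt[of c n "dlt c"] by (simp add: dlt_def)
    show "dotn n (dlt c) (dlt d) = 0" if "c \<in> iso" "d \<in> iso" "c \<noteq> d" for c d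
      using that isoI dotn_dlt[of c n "dlt d"] by (simp add: dlt_def)
    fix k assume k: "k \<in> G4"
    hence kn: "k < n" and k3: "nu k = 3" by (auto simp: G4_def)
    have q1: "dotn n (q k) (q k) = 1" using qorth[OF kn kn] by simp
    have "3 = dotn n (q k) (mulv n M (q k))" using basis_quad[OF EM kn] k3 by simp
    also have "\<dots> = dotn n (q k) (mulv n L (q k)) + 2 * (\<Sum>i\<in>iso. (q k i)^2)"
      unfolding M_def L_def iso_def by (rule F2[OF N])
    also have "dotn n (q k) (mulv n L (q k)) \<le> 2 * dotn n (q k) (q k) - (\<Sum>i\<in>iso. (q k i)^2)"
      unfolding L_def iso_def by (rule quad_upper[OF N])
    finally have ge: "(\<Sum>i\<in>iso. (q k i)^2) \<ge> 1" using q1 by simp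
    have le: "(\<Sum>i\<in>iso. (q k i)^2) \<le> dotn n (q k) (q k)"
      unfolding dotn_def power2_eq_square by (rule sum_mono2) (auto simp: isoI)
    have "dotn n (q k) (q k) = (\<Sum>i\<in>iso. (q k i)^2)" using ge le q1 by simp
    also have "\<dots> = (\<Sum>c\<in>iso. (dotn n (q k) (dlt c))^2)"
      by (rule sum.cong) (auto simp: dotn_comm[of n "q k"] dotn_dlt isoI)
    finally show "dotn n (q k) (q k) = (\<Sum>c\<in>iso. (dotn n (q k) (dlt c))^2)" .
  qed
  have C3: "card G1 + card G2 + card G3 + card G4 = n"
  proof -
    have "{..<n} = ((G1 \<union> G2) \<union> G3) \<union> G4" by (auto simp: G1_def G2_def G3_def G4_def)
    hence "n = card (((G1 \<union> G2) \<union> G3) \<union> G4)" by (metis card_lessThan)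
    also have "\<dots> = card G1 + card G2 + card G3 + card G4"
      by (subst card_Un_disjoint, simp add: G1_def G2_def G3_def G4_def, simp add: G1_def G2_def G3_def G4_def,
          force simp: G1_def G2_def G3_def G4_def)+
         (simp add: G1_def G2_def G3_def G4_def)
    finally show ?thesis by simp
  qed
  have C5: "card V' + card iso = n"
  proof -
    have "{..<n} = V' \<union> iso" by (auto simp: V'_def isoI)
    moreover have "V' \<inter> iso = {}" by (auto simp: V'_def isoI)
    ultimately show ?thesis by (metis card_Un_disjoint card_lessThan finV finite_Un finite_lessThan)
  qed
  define G12 where "G12 = {k. k < n \<and> nu k \<le> 1}"
  have G12c: "card G12 = card G1 + card G2"
  proof -
    have "G12 = G1 \<union> G2" by (auto simp: G12_def G1_def G2_def)
    thus ?thesis by (simp add: card_Un_disjoint G1_def G2_def)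
      (subst card_Un_disjoint, auto)
  qed
  have BG: "B \<le> card G12" using C1 C2 C3 C5 cnt' G12c by linarith
  have nule: "nu k \<le> 1" if k: "k < B" for k
  proof (rule ccontr)
    assume "\<not> nu k \<le> 1"
    moreover have "k \<le> B - 1" using k by simp
    moreover have "B - 1 < n" using Bn B by simp
    ultimately have gt: "nu (B - 1) > 1" using soM by (meson le_less_trans not_le)
    have "G12 \<subseteq> {..<B - 1}"
    proof
      fix x assume "x \<in> G12"
      hence x: "x < n" "nu x \<le> 1" by (auto simp: G12_def)
      show "x \<in> {..<B - 1}"
      proof (rule ccontr)
        assume "x \<notin> {..<B - 1}"
        hence "B - 1 \<le> x" by simp
        hence "nu (B - 1) \<le> nu x" using soM x by blast
        thus False using gt x by simp
      qed
    qed
    hence "card G12 \<le> B - 1" using card_mono[of "{..<B - 1}" G12] by simp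
    thus False using BG B by simp
  qed
  have qz: "q k v = 0" if "k < B" "v < n" "dg A v = 0" for k v
    using z3[of k v] nule[OF that(1)] that Bn isoI by simp
  have quadq: "dotn n (q k) (mulv n L (q k)) = nu k" if k: "k < B" for k
  proof -
    have "nu k = dotn n (q k) (mulv n M (q k))" using basis_quad[OF EM, of k] k Bn by simp
    also have "\<dots> = dotn n (q k) (mulv n L (q k)) + 2 * (\<Sum>i\<in>iso. (q k i)^2)"
      unfolding M_def L_def iso_def by (rule F2[OF N])
    also have "(\<Sum>i\<in>iso. (q k i)^2) = 0" using qz[OF k] isoI by simp
    finally show ?thesis by simp
  qed
  have Oq: "orthon n B q" unfolding orthon_def using qorth Bn by auto
  have sum_le: "(\<Sum>i<B. lam i) \<le> (\<Sum>k<B. nu k)"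
  proof -
    have "(\<Sum>i<B. lam i) \<le> (\<Sum>j<B. dotn n (q j) (mulv n L (q j)))"
      by (rule ky_fan[OF EL SL _ Oq B Bn]) (use soL in auto)
    also have "\<dots> = (\<Sum>k<B. nu k)" by (rule sum.cong) (auto simp: quadq)
    finally show ?thesis .
  qed
  have nu_le_lam: "nu j \<le> lam j" if j: "j < B" for j
  proof (rule ccontr)
    assume "\<not> nu j \<le> lam j"
    hence lt: "lam j < nu j" by simp
    have jn: "j < n" using j Bn by simp
    have Op: "orthon n (Suc j) p" using EL jn unfolding eigbasis_def orthon_def by auto
    have "Suc j \<le> card {k. k < n \<and> nu k < nu j}"
    proof (rule bessel_count[OF Op, of "{k. k < n \<and> nu k < nu j}" q])
      show "finite {k. k < n \<and> nu k < nu j}" by simp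
      show "dotn n (q c) (q c) = 1" if "c \<in> {k. k < n \<and> nu k < nu j}" for c using that qorth by simp
      show "dotn n (q c) (q d) = 0" if "c \<in> {k. k < n \<and> nu k < nu j}" "d \<in> {k. k < n \<and> nu k < nu j}" "c \<noteq> d" for c d
        using that qorth by simp
      fix i assume i: "i < Suc j"
      have lij: "lam i \<le> lam j" using soL i jn by simp
      have in_: "i < n" using i jn by simp
      have ne1: "lam i \<noteq> 1" using lij lt nule[OF j] by simp
      have zp: "p i v = 0" if "v < n" "dg A v = 0" for v using z1[OF in_ ne1] that isoI by simp
      have evM: "mulv n M (p i) r = lam i * p i r" if r: "r < n" for r
        using F1'[OF N r zp] peig[OF in_ r] by (simp add: M_def L_def)
      show "dotn n (p i) (p i) = (\<Sum>c\<in>{k. k < n \<and> nu k < nu j}. (dotn n (p i) (q c))^2)"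
        by (rule eigvec_norm_restrict[OF EM SM evM]) (use lij lt in auto)
    qed
    moreover have "{k. k < n \<and> nu k < nu j} \<subseteq> {..<j}"
    proof
      fix k assume "k \<in> {k. k < n \<and> nu k < nu j}"
      hence k: "k < n" "nu k < nu j" by auto
      show "k \<in> {..<j}"
      proof (rule ccontr)
        assume "k \<notin> {..<j}"
        hence "j \<le> k" by simp
        hence "nu j \<le> nu k" using soM k by blast
        thus False using k by simp
      qed
    qed
    hence "card {k. k < n \<and> nu k < nu j} \<le> j" using card_mono[of "{..<j}"] by fastforce
    ultimately show False by simp
  qed
  have sum_eq: "(\<Sum>i<B. lam i) = (\<Sum>k<B. nu k)"
    using sum_le sum_mono[of "{..<B}" nu lam] nu_le_lam by fastforce
  define U where "U = mat n B (\<lambda>(v,j). sq A v * q j v)"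
  have Uc: "U \<in> carrier_mat n B" by (simp add: U_def)
  have wv: "wvec A U j v = q j v" if "j < B" "v < n" for j v
  proof (cases "dg A v = 0")
    case True thus ?thesis using qz[OF that True] that by (simp add: wvec_def U_def)
  next
    case False
    hence "dg A v > 0" using dg_nonneg[OF N that(2)] by simp
    hence "sqrt (dg A v) * sq A v = 1" using sq_sqrt[of A v] by (simp add: mult.commute)
    thus ?thesis using that by (simp add: wvec_def U_def mult.assoc[symmetric])
  qed
  have Ow: "orthon n B (wvec A U)"
    unfolding orthon_def
  proof (intro allI impI)
    fix i j assume ij: "i < B" "j < B"
    have "dotn n (wvec A U i) (wvec A U j) = dotn n (q i) (q j)" by (rule dotn_cong) (use wv ij in auto)
    thus "dotn n (wvec A U i) (wvec A U j) = (if i = j then 1 else 0)" using Oq ij by (simp add: orthon_def)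
  qed
  have F: "U\<^sup>T * diag_of_vec (deg A) * U = 1\<^sub>m B" using feas_orthon[OF N Uc] Ow by simp
  have "mtrace (U\<^sup>T * L_un A * U) = (\<Sum>j<B. dotn n (wvec A U j) (mulv n (L_sym A) (wvec A U j)))"
    by (rule trace_id[OF N Uc])
  also have "\<dots> = (\<Sum>j<B. dotn n (q j) (mulv n L (q j)))"
  proof (rule sum.cong[OF refl])
    fix j assume "j \<in> {..<B}"
    hence j: "j < B" by simp
    show "dotn n (wvec A U j) (mulv n (L_sym A) (wvec A U j)) = dotn n (q j) (mulv n L (q j))"
      by (rule dotn_cong) (use wv[OF j] in \<open>auto simp: L_def intro: mulv_cong\<close>)
  qed
  also have "\<dots> = (\<Sum>k<B. nu k)" by (rule sum.cong) (auto simp: quadq)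
  also have "\<dots> = (\<Sum>i<B. sorted_eigenvalues L ! i)" using sum_eq seL Bn by simp
  finally have T: "mtrace (U\<^sup>T * L_un A * U) = (\<Sum>i<B. sorted_eigenvalues L ! i)" .
  show ?thesis using Uc F T unfolding n_def A_def L_def by blast
qed

lemma lbp_count:
  fixes xs :: "real list"
  assumes "largest_B_pos B xs"
  shows "B \<le> card {i. i < length xs \<and> xs ! i > 0}"
proof -
  define ys where "ys = rev (sort xs)"
  have len: "length ys = length xs" by (simp add: ys_def)
  have sub: "{..<B} \<subseteq> {j. j < length ys \<and> ys ! j > 0}"
    using assms len unfolding largest_B_pos_def ys_def by auto
  have "B \<le> card {j. j < length ys \<and> ys ! j > 0}"
    using card_mono[OF _ sub] by simp
  also have "\<dots> = length (filter (\<lambda>x. x > 0) ys)" by (simp add: length_filter_conv_card)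
  also have "\<dots> = length (filter (\<lambda>x. x > 0) xs)"
  proof -
    have "mset ys = mset xs" by (simp add: ys_def)
    hence "mset (filter (\<lambda>x. x > 0) ys) = mset (filter (\<lambda>x. x > 0) xs)" by simp
    thus ?thesis by (metis size_mset)
  qed
  also have "\<dots> = card {i. i < length xs \<and> xs ! i > 0}" by (simp add: length_filter_conv_card)
  finally show ?thesis .
qed

lemma count_V':
  assumes X: "X \<in> carrier_mat R C" and nn: "nonneg_mat X"
    and r: "largest_B_pos B (row_sums X)" and c: "largest_B_pos B (col_sums X)"
  shows "2 * B \<le> card {v. v < R + C \<and> dg (A_bp X) v \<noteq> 0}"
proof -
  define A where "A = A_bp X"
  have rs: "row_sums X ! i = dg A i" if "i < R" for i
    using that X by (simp add: row_sums_def A_def dg_row)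
  have cs: "col_sums X ! j = dg A (R + j)" if "j < C" for j
    using that X by (simp add: col_sums_def A_def dg_col)
  have lr: "length (row_sums X) = R" using X by (simp add: row_sums_def)
  have lc: "length (col_sums X) = C" using X by (simp add: col_sums_def)
  define S1 where "S1 = {i. i < R \<and> dg A i > 0}"
  define S2 where "S2 = {j. j < C \<and> dg A (R + j) > 0}"
  have c1: "B \<le> card S1"
  proof -
    have "{i. i < length (row_sums X) \<and> row_sums X ! i > 0} = S1" using rs lr by (auto simp: S1_def)
    thus ?thesis using lbp_count[OF r] by simp
  qed
  have c2: "B \<le> card S2"
  proof -
    have "{i. i < length (col_sums X) \<and> col_sums X ! i > 0} = S2" using cs lc by (auto simp: S2_def)
    thus ?thesis using lbp_count[OF c] by simp
  qed
  have cim: "card ((\<lambda>j. R + j) ` S2) = card S2" by (rule card_image) (simp add: inj_on_def)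
  have sub: "S1 \<union> (\<lambda>j. R + j) ` S2 \<subseteq> {v. v < R + C \<and> dg A v \<noteq> 0}" by (auto simp: S1_def S2_def)
  have disj: "S1 \<inter> (\<lambda>j. R + j) ` S2 = {}" by (auto simp: S1_def)
  have "card (S1 \<union> (\<lambda>j. R + j) ` S2) = card S1 + card S2"
    using card_Un_disjoint[OF _ _ disj] cim by (simp add: S1_def S2_def)
  moreover have "card (S1 \<union> (\<lambda>j. R + j) ` S2) \<le> card {v. v < R + C \<and> dg A v \<noteq> 0}"
    by (rule card_mono[OF _ sub]) simp
  ultimately show ?thesis using c1 c2 by (simp add: A_def)
qed

lemma obj3_le_obj4:
  assumes F: "feas4 R C B Y V" and a: "\<alpha> > 0" and B: "1 \<le> B" "B \<le> R + C"
  shows "obj3 f \<alpha> B Y \<le> obj4 f \<alpha> Y V"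
proof -
  have Y: "Y \<in> carrier_mat R C" "nonneg_mat Y" and V: "V \<in> carrier_mat (R+C) B"
    and D: "V\<^sup>T * diag_of_vec (deg (A_bp Y)) * V = 1\<^sub>m B" using F by (auto simp: feas4_def)
  have "(\<Sum>i<B. sorted_eigenvalues (L_sym (A_bp Y)) ! i) \<le> mtrace (V\<^sup>T * L_un (A_bp Y) * V)"
    by (rule lower_bound[OF Abp_nonneg_sq[OF Y] V D B])
  thus ?thesis using a unfolding obj3_def obj4_def eig_sum by simp
qed

lemma feas1_zero:
  assumes F: "feas1 R C B Y" and B: "1 \<le> B" "B \<le> R + C"
  shows "feas3 R C Y" "(\<Sum>j=1..B. eig_small j (L_sym (A_bp Y))) = 0"
proof -
  have Y: "Y \<in> carrier_mat R C" "nonneg_mat Y" and bd: "block_diag_perm B Y" using F by (auto simp: feas1_def)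
  show "feas3 R C Y" using Y by (simp add: feas3_def)
  obtain k lr lc where "B \<le> k" "labeling Y R C k lr lc" using block_to_labeling[OF Y(1) bd] by blast
  from labeling_zero_sum[OF Y this(2) B(1) this(1) B(2)]
  show "(\<Sum>j=1..B. eig_small j (L_sym (A_bp Y))) = 0" unfolding eig_sum .
qed

lemma zero_feas1:
  assumes F: "feas3 R C X" and B: "1 \<le> B" "B \<le> R + C" and S: "(\<Sum>j=1..B. eig_small j (L_sym (A_bp X))) = 0"
  shows "feas1 R C B X"
proof -
  have X: "X \<in> carrier_mat R C" "nonneg_mat X" using F by (auto simp: feas3_def)
  obtain k lr lc where "B \<le> k" "labeling X R C k lr lc" using zero_sum_labeling[OF X B S[unfolded eig_sum]] by blast
  hence "block_diag_perm B X" using labeling_to_block[OF X(1)] by blast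
  thus ?thesis using X by (simp add: feas1_def)
qed

lemma construct_U:
  assumes F: "feas3 R C X" and B: "1 \<le> B"
    and r: "largest_B_pos B (row_sums X)" and c: "largest_B_pos B (col_sums X)"
  shows "\<exists>U. feas4 R C B X U \<and> obj4 f \<alpha> X U = obj3 f \<alpha> B X"
proof -
  have X: "X \<in> carrier_mat R C" "nonneg_mat X" using F by (auto simp: feas3_def)
  obtain U where U: "U \<in> carrier_mat (R+C) B" "U\<^sup>T * diag_of_vec (deg (A_bp X)) * U = 1\<^sub>m B"
    "mtrace (U\<^sup>T * L_un (A_bp X) * U) = (\<Sum>i<B. sorted_eigenvalues (L_sym (A_bp X)) ! i)"
    using part2_construct[OF X B count_V'[OF X r c]] by blast
  have "feas4 R C B X U" using X U by (simp add: feas4_def)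
  moreover have "obj4 f \<alpha> X U = obj3 f \<alpha> B X" unfolding obj4_def obj3_def eig_sum U(3) ..
  ultimately show ?thesis by blast
qed

theorem proposition6:
  fixes f :: "real mat \<Rightarrow> real" and \<alpha> :: real and B R C :: nat
  assumes "\<alpha> > 0" and "B \<ge> 1" and "B \<le> R + C"
  shows
   "(\<forall>X. global_min (feas3 R C) (obj3 f \<alpha> B) X \<and>
          (\<Sum>j=1..B. eig_small j (L_sym (A_bp X))) = 0
        \<longrightarrow> global_min (feas1 R C B) f X) \<and>
    (\<forall>X. local_min (feas3 R C) (obj3 f \<alpha> B) X \<and>
          (\<Sum>j=1..B. eig_small j (L_sym (A_bp X))) = 0
        \<longrightarrow> local_min (feas1 R C B) f X) \<and>
    (\<forall>X. global_min (feas3 R C) (obj3 f \<alpha> B) X \<and>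
          largest_B_pos B (row_sums X) \<and> largest_B_pos B (col_sums X)
        \<longrightarrow> (\<exists>U. coord_min (feas4 R C B) (obj4 f \<alpha>) X U \<and>
                 global_min2 (feas4 R C B) (obj4 f \<alpha>) X U)) \<and>
    (\<forall>X. local_min (feas3 R C) (obj3 f \<alpha> B) X \<and>
          largest_B_pos B (row_sums X) \<and> largest_B_pos B (col_sums X)
        \<longrightarrow> (\<exists>U. coord_min (feas4 R C B) (obj4 f \<alpha>) X U \<and>
                 local_min2 (feas4 R C B) (obj4 f \<alpha>) X U))"
proof (intro conjI allI impI)
  have a: "\<alpha> > 0" and B: "1 \<le> B" "B \<le> R + C" using assms by auto
  have f3: "feas3 R C Y" if "feas4 R C B Y V" for Y V using that by (simp add: feas4_def feas3_def)
  {
    fix X assume h: "global_min (feas3 R C) (obj3 f \<alpha> B) X \<and> (\<Sum>j=1..B. eig_small j (L_sym (A_bp X))) = 0"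
    have F3: "feas3 R C X" and mn: "\<forall>Y. feas3 R C Y \<longrightarrow> obj3 f \<alpha> B X \<le> obj3 f \<alpha> B Y"
      and S: "(\<Sum>j=1..B. eig_small j (L_sym (A_bp X))) = 0" using h by (auto simp: global_min_def)
    show "global_min (feas1 R C B) f X"
      unfolding global_min_def
    proof (intro conjI allI impI)
      show "feas1 R C B X" by (rule zero_feas1[OF F3 B S])
      fix Y assume Y: "feas1 R C B Y"
      have "obj3 f \<alpha> B X \<le> obj3 f \<alpha> B Y" using mn feas1_zero(1)[OF Y B] by blast
      thus "f X \<le> f Y" using S feas1_zero(2)[OF Y B] by (simp add: obj3_def)
    qed
  }
  {
    fix X assume h: "local_min (feas3 R C) (obj3 f \<alpha> B) X \<and> (\<Sum>j=1..B. eig_small j (L_sym (A_bp X))) = 0"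
    have F3: "feas3 R C X" and S: "(\<Sum>j=1..B. eig_small j (L_sym (A_bp X))) = 0" using h by (auto simp: local_min_def)
    obtain \<epsilon> where e: "\<epsilon> > 0" and mn: "\<forall>Y. feas3 R C Y \<and> mdist X Y < \<epsilon> \<longrightarrow> obj3 f \<alpha> B X \<le> obj3 f \<alpha> B Y"
      using h by (auto simp: local_min_def)
    show "local_min (feas1 R C B) f X"
      unfolding local_min_def
    proof (intro conjI exI[of _ \<epsilon>] allI impI)
      show "feas1 R C B X" by (rule zero_feas1[OF F3 B S])
      show "\<epsilon> > 0" by (rule e)
      fix Y assume Y: "feas1 R C B Y \<and> mdist X Y < \<epsilon>"
      have "obj3 f \<alpha> B X \<le> obj3 f \<alpha> B Y" using mn feas1_zero(1)[of R C B Y] Y B by blast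
      thus "f X \<le> f Y" using S feas1_zero(2)[of R C B Y] Y B by (simp add: obj3_def)
    qed
  }
  {
    fix X assume h: "global_min (feas3 R C) (obj3 f \<alpha> B) X \<and> largest_B_pos B (row_sums X) \<and> largest_B_pos B (col_sums X)"
    have F3: "feas3 R C X" and mn: "\<forall>Y. feas3 R C Y \<longrightarrow> obj3 f \<alpha> B X \<le> obj3 f \<alpha> B Y"
      using h by (auto simp: global_min_def)
    obtain U where U: "feas4 R C B X U" "obj4 f \<alpha> X U = obj3 f \<alpha> B X"
      using construct_U[OF F3 B(1)] h by blast
    have cm: "coord_min (feas4 R C B) (obj4 f \<alpha>) X U"
      unfolding coord_min_def using U obj3_le_obj4[OF _ a B] by auto
    have gm: "global_min2 (feas4 R C B) (obj4 f \<alpha>) X U"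
      unfolding global_min2_def
    proof (intro conjI allI impI)
      show "feas4 R C B X U" by (rule U(1))
      fix Y V assume YV: "feas4 R C B Y V"
      have "obj4 f \<alpha> X U = obj3 f \<alpha> B X" by (rule U(2))
      also have "\<dots> \<le> obj3 f \<alpha> B Y" using mn f3[OF YV] by blast
      also have "\<dots> \<le> obj4 f \<alpha> Y V" by (rule obj3_le_obj4[OF YV a B])
      finally show "obj4 f \<alpha> X U \<le> obj4 f \<alpha> Y V" .
    qed
    show "\<exists>U. coord_min (feas4 R C B) (obj4 f \<alpha>) X U \<and> global_min2 (feas4 R C B) (obj4 f \<alpha>) X U"
      using cm gm by blast
  }
  {
    fix X assume h: "local_min (feas3 R C) (obj3 f \<alpha> B) X \<and> largest_B_pos B (row_sums X) \<and> largest_B_pos B (col_sums X)"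
    have F3: "feas3 R C X" using h by (auto simp: local_min_def)
    obtain \<epsilon> where e: "\<epsilon> > 0" and mn: "\<forall>Y. feas3 R C Y \<and> mdist X Y < \<epsilon> \<longrightarrow> obj3 f \<alpha> B X \<le> obj3 f \<alpha> B Y"
      using h by (auto simp: local_min_def)
    obtain U where U: "feas4 R C B X U" "obj4 f \<alpha> X U = obj3 f \<alpha> B X"
      using construct_U[OF F3 B(1)] h by blast
    have cm: "coord_min (feas4 R C B) (obj4 f \<alpha>) X U"
      unfolding coord_min_def using U obj3_le_obj4[OF _ a B] by auto
    have lm: "local_min2 (feas4 R C B) (obj4 f \<alpha>) X U"
      unfolding local_min2_def
    proof (intro conjI exI[of _ \<epsilon>] allI impI)
      show "feas4 R C B X U" by (rule U(1))
      show "\<epsilon> > 0" by (rule e)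
      fix Y V assume YV: "feas4 R C B Y V \<and> mdist X Y < \<epsilon> \<and> mdist U V < \<epsilon>"
      have "obj4 f \<alpha> X U = obj3 f \<alpha> B X" by (rule U(2))
      also have "\<dots> \<le> obj3 f \<alpha> B Y" using mn f3[of Y V] YV by blast
      also have "\<dots> \<le> obj4 f \<alpha> Y V" using obj3_le_obj4[OF _ a B] YV by blast
      finally show "obj4 f \<alpha> X U \<le> obj4 f \<alpha> Y V" .
    qed
    show "\<exists>U. coord_min (feas4 R C B) (obj4 f \<alpha>) X U \<and> local_min2 (feas4 R C B) (obj4 f \<alpha>) X U"
      using cm lm by blast
  }
qed

end
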